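(* Let $G$ be a GP 2 host graph such that every node is marked grey, exactly one node is a root, every edge is unmarked and labelled with an integer, and there are no loops; let $n$ and $m$ be its numbers of nodes and edges. When the GP 2 program bellman-ford is executed on $G$ (via the GP 2-to-C compiler, under the cost model below), it terminates in time $\mathrm{O}(nm)$.
   Context: GP 2 semantics. Host graphs are finite directed graphs whose nodes and edges carry labels (lists of integers and strings; "x:s" denotes the list x followed by the atom s) and marks (nodes: unmarked, red, green, blue, grey; edges: unmarked, red, green, blue, dashed); some nodes are roots. A rule (with list variables x,y and integer variables i,s,t,w) is applied by finding an injective label- and mark-compatible match of its left-hand side (mark "any" matches every mark; roots match roots), satisfying the dangling condition and the rule's condition, then changing matched items as prescribed by the right-hand side. Commands: a rule set call applies one applicable rule, failing if none applies; $P;Q$ sequencing; $P!$ iterates $P$ until it fails; "try $C$ then $P$ else $Q$" runs $C$ and continues with $P$ on its result if it succeeded, else $Q$ on the original graph; "if $C$ then $P$ else $Q$" runs $C$ on a copy then $P$ or $Q$ on the original; fail causes failure. Cost model (updated GP 2-to-C compiler). Host nodes are stored in separate linked lists per node mark, roots in a list, and each node has a two-dimensional array of linked lists of incident edges indexed by edge mark and orientation (incoming, outgoing, loop). Each elementary operation takes constant time: fetch first/next node with a given mark; fetch first/next root; given a node, fetch first/next incoming, outgoing or loop edge with a given mark; read degrees, mark, root status, source, target; set/clear/test a "matched" flag. Matching is a search using these operations; once a match is found, completing a rule application takes constant time for the rules of this program. Running time is the total cost. The program bellman-ford: Main = set_counter; count!; (decrement; Relax!; Clean!)!; Final Relax =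 root1; try no_deg else ((unmarked_edge; try {unvisited, reduce}; finish)!; unroot1) Clean = root2; unmark_edge!; unroot2 Final = (root1; (unmarked_edge; if reduce then set_flag; finish)!; unroot1)!; if flag then fail; delete_counter; no_deg_inv! Rules (edges directed 1→2; labels unchanged unless stated): - set_counter(x): grey root labelled x becomes blue non-root labelled x:0; a new green node labelled 0 is created with a new dashed edge from it to node 1. - count(x; i): grey node 1 labelled x and green node 2 labelled i; node 1 becomes blue labelled x:"f", node 2 labelled i+1. - decrement(i): green node labelled i with i>0; label becomes i−1. - root1: blue node becomes blue root. - no_deg(x): a blue root labelled x with no incident edges is replaced by an unmarked non-root node labelled x. - unmarked_edge: blue root 1, node 2 any mark, unmarked edge 1→2; edge becomes red. - unvisited(x,y; s,w): blue root 1 labelled x:s, node 2 labelled y:"f", red edge labelled w; node 2 labelled y:(s+w). - reduce(x,y; s,t,w): blue root 1 labelled x:s, node 2 labelled y:t, red edge labelled w, condition s+w<t; node 2 labelled y:(s+w). - finish: blue root 1, red edge 1→2; edge becomes blue. - unroot1: blue root becomes grey non-root. - root2: grey node becomes blue root. - unmark_edge: blue root 1, blue edge 1→2; edge becomes unmarked. - unroot2: blue root becomes blue non-root. - set_flag: a green node's label becomes −1. - flag: green node labelled −1; no change. - delete_counter: a node 1 together with a green node and a dashed edge from the green node to node 1; the green node and dashed edge are deleted and node 1 becomes a root. - no_deg_inv: an unmarked node becomes grey. *)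

theory Defs
  imports Main
begin

datatype atom = AInt int | AStr string
type_synonym label = "atom list"   \<comment> \<open>"x:s" is  x @ [s]\<close>

datatype nmark = NUnm | NRed | NGreen | NBlue | NGrey
datatype emark = EUnm | ERed | EGreen | EBlue | EDashed

record hgraph =
  V    :: "nat set"
  E    :: "nat set"
  src  :: "nat \<Rightarrow> nat"
  tgt  :: "nat \<Rightarrow> nat"
  nlab :: "nat \<Rightarrow> label"
  elab :: "nat \<Rightarrow> label"
  nmk  :: "nat \<Rightarrow> nmark"
  emk  :: "nat \<Rightarrow> emark"
  rt   :: "nat set"

definition wf_graph :: "hgraph \<Rightarrow> bool" where
  "wf_graph g \<longleftrightarrow> finite (V g) \<and> finite (E g) \<and>
     (\<forall>e\<in>E g. src g e \<in> V g \<and> tgt g e \<in> V g) \<and> rt g \<subseteq> V g"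

text \<open>The linked lists of the compiler's host-graph representation (as sets; their
  order is left arbitrary, see scan below).\<close>
definition nodes_mk :: "hgraph \<Rightarrow> nmark \<Rightarrow> nat set" where
  "nodes_mk g \<mu> = {v \<in> V g. nmk g v = \<mu>}"

definition roots :: "hgraph \<Rightarrow> nat set" where
  "roots g = rt g \<inter> V g"

definition out_mk :: "hgraph \<Rightarrow> nat \<Rightarrow> emark \<Rightarrow> nat set" where
  "out_mk g v \<mu> = {e \<in> E g. src g e = v \<and> tgt g e \<noteq> v \<and> emk g e = \<mu>}"

section \<open>Cost of matching: search plans over linked lists\<close>

text \<open>A search outcome is a pair (found match or None, number of elementary operations).
  Traversing a list: every fetch of a first/next element costs 1 (including the final
  fetch that returns null); the search stops at the first candidate whose sub-search succeeds.\<close>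
fun scan_list :: "'a list \<Rightarrow> ('a \<Rightarrow> ('r option \<times> nat) set) \<Rightarrow> ('r option \<times> nat) set" where
  "scan_list [] k = {(None, 1)}"
| "scan_list (x # xs) k =
     {(Some r, Suc c) | r c. (Some r, c) \<in> k x} \<union>
     {(res, Suc (c + c')) | c res c'. (None, c) \<in> k x \<and> (res, c') \<in> scan_list xs k}"

text \<open>The order of a linked list is arbitrary: any enumeration of the candidate set.\<close>
definition scan :: "'a set \<Rightarrow> ('a \<Rightarrow> ('r option \<times> nat) set) \<Rightarrow> ('r option \<times> nat) set" where
  "scan S k = (\<Union>xs \<in> {xs. distinct xs \<and> set xs = S}. scan_list xs k)"

text \<open>Testing a candidate (mark, root status, degrees, label, matched flag) costs 1.\<close>
definition chk :: "bool \<Rightarrow> ('r option \<times> nat) set \<Rightarrow> ('r option \<times> nat) set" where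
  "chk P K = (if P then {(r, Suc c) | r c. (r, c) \<in> K} else {(None, 1)})"

definition found :: "'r \<Rightarrow> ('r option \<times> nat) set" where
  "found r = {(Some r, 0)}"

datatype rule = SetCounter | Count | Decrement | Root1 | NoDeg | UnmarkedEdge | Unvisited
  | Reduce | Finish | Unroot1 | Root2 | UnmarkEdge | Unroot2 | SetFlag | Flag
  | DeleteCounter | NoDegInv

definition is_int_label :: "label \<Rightarrow> bool" where
  "is_int_label l \<longleftrightarrow> (\<exists>i. l = [AInt i])"

definition int_suffix :: "label \<Rightarrow> bool" where
  "int_suffix l \<longleftrightarrow> (\<exists>x s. l = x @ [AInt s])"

text \<open>Search plans (matches are lists [node1, node2, edge] of host items).
  Root LHS nodes are searched in the root list, other nodes in the list of their mark,
  nodes of mark any are reached through edges.\<close>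
fun search :: "rule \<Rightarrow> hgraph \<Rightarrow> (nat list option \<times> nat) set" where
  "search SetCounter g = scan (roots g) (\<lambda>v. chk (nmk g v = NGrey) (found [v]))"
| "search Count g = scan (nodes_mk g NGrey) (\<lambda>v. chk True
      (scan (nodes_mk g NGreen) (\<lambda>u. chk (is_int_label (nlab g u)) (found [v, u]))))"
| "search Decrement g = scan (nodes_mk g NGreen)
      (\<lambda>u. chk (\<exists>i. nlab g u = [AInt i] \<and> i > 0) (found [u]))"
| "search Root1 g = scan (nodes_mk g NBlue) (\<lambda>v. chk True (found [v]))"
| "search NoDeg g = scan (roots g)
      (\<lambda>v. chk (nmk g v = NBlue \<and> (\<forall>e\<in>E g. src g e \<noteq> v \<and> tgt g e \<noteq> v)) (found [v]))"
| "search UnmarkedEdge g = scan (roots g) (\<lambda>v. chk (nmk g v = NBlue)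
      (scan (out_mk g v EUnm) (\<lambda>e. chk True (found [v, tgt g e, e]))))"
| "search Unvisited g = scan (roots g) (\<lambda>v. chk (nmk g v = NBlue \<and> int_suffix (nlab g v))
      (scan (out_mk g v ERed) (\<lambda>e. chk (is_int_label (elab g e) \<and>
          (\<exists>y. nlab g (tgt g e) = y @ [AStr ''f''])) (found [v, tgt g e, e]))))"
| "search Reduce g = scan (roots g) (\<lambda>v. chk (nmk g v = NBlue \<and> int_suffix (nlab g v))
      (scan (out_mk g v ERed) (\<lambda>e. chk (\<exists>x y s t w. nlab g v = x @ [AInt s] \<and>
          elab g e = [AInt w] \<and> nlab g (tgt g e) = y @ [AInt t] \<and> s + w < t)
          (found [v, tgt g e, e]))))"
| "search Finish g = scan (roots g) (\<lambda>v. chk (nmk g v = NBlue)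
      (scan (out_mk g v ERed) (\<lambda>e. chk True (found [v, tgt g e, e]))))"
| "search Unroot1 g = scan (roots g) (\<lambda>v. chk (nmk g v = NBlue) (found [v]))"
| "search Root2 g = scan (nodes_mk g NGrey) (\<lambda>v. chk True (found [v]))"
| "search UnmarkEdge g = scan (roots g) (\<lambda>v. chk (nmk g v = NBlue)
      (scan (out_mk g v EBlue) (\<lambda>e. chk True (found [v, tgt g e, e]))))"
| "search Unroot2 g = scan (roots g) (\<lambda>v. chk (nmk g v = NBlue) (found [v]))"
| "search SetFlag g = scan (nodes_mk g NGreen) (\<lambda>u. chk True (found [u]))"
| "search Flag g = scan (nodes_mk g NGreen) (\<lambda>u. chk (nlab g u = [AInt (-1)]) (found [u]))"
| "search DeleteCounter g = scan (nodes_mk g NGreen) (\<lambda>u. chk True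
      (scan (out_mk g u EDashed) (\<lambda>e.
         chk (\<forall>e'\<in>E g. (src g e' = u \<or> tgt g e' = u) \<longrightarrow> e' = e)  \<comment> \<open>dangling condition\<close>
         (found [tgt g e, u, e]))))"
| "search NoDegInv g = scan (nodes_mk g NUnm) (\<lambda>v. chk True (found [v]))"

fun app :: "rule \<Rightarrow> hgraph \<Rightarrow> nat list \<Rightarrow> hgraph set" where
  "app SetCounter g m = (let v = m ! 0 in
     {g\<lparr>V := insert c (V g), E := insert e (E g), src := (src g)(e := c), tgt := (tgt g)(e := v),
        nlab := (nlab g)(v := nlab g v @ [AInt 0], c := [AInt 0]), elab := (elab g)(e := []),
        nmk := (nmk g)(v := NBlue, c := NGreen), emk := (emk g)(e := EDashed),
        rt := rt g - {v, c}\<rparr> | c e. c \<notin> V g \<and> e \<notin> E g})"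
| "app Count g m = (let v = m ! 0; u = m ! 1 in
     {g\<lparr>nlab := (nlab g)(v := nlab g v @ [AStr ''f''], u := [AInt (i + 1)]),
        nmk := (nmk g)(v := NBlue)\<rparr> | i. nlab g u = [AInt i]})"
| "app Decrement g m = (let u = m ! 0 in
     {g\<lparr>nlab := (nlab g)(u := [AInt (i - 1)])\<rparr> | i. nlab g u = [AInt i]})"
| "app Root1 g m = {g\<lparr>rt := insert (m ! 0) (rt g)\<rparr>}"
| "app NoDeg g m = {g\<lparr>nmk := (nmk g)(m ! 0 := NUnm), rt := rt g - {m ! 0}\<rparr>}"
| "app UnmarkedEdge g m = {g\<lparr>emk := (emk g)(m ! 2 := ERed)\<rparr>}"
| "app Unvisited g m = (let v = m ! 0; u = m ! 1; e = m ! 2 in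
     {g\<lparr>nlab := (nlab g)(u := y @ [AInt (s + w)])\<rparr> | x y s w.
        nlab g v = x @ [AInt s] \<and> nlab g u = y @ [AStr ''f''] \<and> elab g e = [AInt w]})"
| "app Reduce g m = (let v = m ! 0; u = m ! 1; e = m ! 2 in
     {g\<lparr>nlab := (nlab g)(u := y @ [AInt (s + w)])\<rparr> | x y s t w.
        nlab g v = x @ [AInt s] \<and> nlab g u = y @ [AInt t] \<and> elab g e = [AInt w] \<and> s + w < t})"
| "app Finish g m = {g\<lparr>emk := (emk g)(m ! 2 := EBlue)\<rparr>}"
| "app Unroot1 g m = {g\<lparr>nmk := (nmk g)(m ! 0 := NGrey), rt := rt g - {m ! 0}\<rparr>}"
| "app Root2 g m = {g\<lparr>nmk := (nmk g)(m ! 0 := NBlue), rt := insert (m ! 0) (rt g)\<rparr>}"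
| "app UnmarkEdge g m = {g\<lparr>emk := (emk g)(m ! 2 := EUnm)\<rparr>}"
| "app Unroot2 g m = {g\<lparr>rt := rt g - {m ! 0}\<rparr>}"
| "app SetFlag g m = {g\<lparr>nlab := (nlab g)(m ! 0 := [AInt (-1)])\<rparr>}"
| "app Flag g m = {g}"
| "app DeleteCounter g m = {g\<lparr>V := V g - {m ! 1}, E := E g - {m ! 2},
        rt := insert (m ! 0) (rt g - {m ! 1})\<rparr>}"
| "app NoDegInv g m = {g\<lparr>nmk := (nmk g)(m ! 0 := NGrey)\<rparr>}"

text \<open>One rule application: the search cost, plus constant 1 for completing the
  application once a match is found.\<close>
definition rule_step :: "rule \<Rightarrow> hgraph \<Rightarrow> (hgraph option \<times> nat) set" where
  "rule_step r g = {(None, c) | c. (None, c) \<in> search r g} \<union>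
     {(Some g', Suc c) | m c g'. (Some m, c) \<in> search r g \<and> g' \<in> app r g m}"

text \<open>A rule set call: the compiled code tries the rules in the given order.\<close>
fun set_step :: "rule list \<Rightarrow> hgraph \<Rightarrow> (hgraph option \<times> nat) set" where
  "set_step [] g = {(None, 0)}"
| "set_step (r # rs) g = {(Some g', c) | g' c. (Some g', c) \<in> rule_step r g} \<union>
     {(res, c + c') | c res c'. (None, c) \<in> rule_step r g \<and> (res, c') \<in> set_step rs g}"

datatype cmd = Call "rule list" | Seq cmd cmd | Loop cmd | Try cmd cmd cmd
  | IfC cmd cmd cmd | Fail | Skip

text \<open>Outcome of running a command with a time budget b: Done (Some g') b' (success with
  result g' and remaining budget b'), Done None b' (failure), or Out (the execution needs
  more than the budget, in particular when it does not terminate).\<close>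
datatype outcome = Done "hgraph option" nat | Out

inductive exec :: "cmd \<Rightarrow> hgraph \<Rightarrow> nat \<Rightarrow> outcome \<Rightarrow> bool" where
  call_ok:   "(res, c) \<in> set_step rs g \<Longrightarrow> c \<le> b \<Longrightarrow> exec (Call rs) g b (Done res (b - c))"
| call_out:  "(res, c) \<in> set_step rs g \<Longrightarrow> b < c \<Longrightarrow> exec (Call rs) g b Out"
| seq_out:   "exec P g b Out \<Longrightarrow> exec (Seq P Q) g b Out"
| seq_fail:  "exec P g b (Done None b') \<Longrightarrow> exec (Seq P Q) g b (Done None b')"
| seq_ok:    "exec P g b (Done (Some g') b') \<Longrightarrow> exec Q g' b' r \<Longrightarrow> exec (Seq P Q) g b r"
| loop_out:  "exec P g b Out \<Longrightarrow> exec (Loop P) g b Out"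
| loop_stop: "exec P g b (Done None b') \<Longrightarrow> exec (Loop P) g b (Done (Some g) b')"
| loop_step: "exec P g b (Done (Some g') b') \<Longrightarrow> exec (Loop P) g' b' r \<Longrightarrow> exec (Loop P) g b r"
| try_out:   "exec C g b Out \<Longrightarrow> exec (Try C P Q) g b Out"
| try_then:  "exec C g b (Done (Some g') b') \<Longrightarrow> exec P g' b' r \<Longrightarrow> exec (Try C P Q) g b r"
| try_else:  "exec C g b (Done None b') \<Longrightarrow> exec Q g b' r \<Longrightarrow> exec (Try C P Q) g b r"
| if_out:    "exec C g b Out \<Longrightarrow> exec (IfC C P Q) g b Out"
| if_then:   "exec C g b (Done (Some g') b') \<Longrightarrow> exec P g b' r \<Longrightarrow> exec (IfC C P Q) g b r"
| if_else:   "exec C g b (Done None b') \<Longrightarrow> exec Q g b' r \<Longrightarrow> exec (IfC C P Q) g b r"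
| fail:      "exec Fail g b (Done None b)"
| skip:      "exec Skip g b (Done (Some g) b)"

abbreviation R :: "rule \<Rightarrow> cmd" where "R r \<equiv> Call [r]"

definition Relax :: cmd where
  "Relax = Seq (R Root1)
     (Try (R NoDeg) Skip
        (Seq (Loop (Seq (R UnmarkedEdge)
                        (Seq (Try (Call [Unvisited, Reduce]) Skip Skip) (R Finish))))
             (R Unroot1)))"

definition Clean :: cmd where
  "Clean = Seq (R Root2) (Seq (Loop (R UnmarkEdge)) (R Unroot2))"

definition Final :: cmd where
  "Final = Seq (Loop (Seq (R Root1)
                  (Seq (Loop (Seq (R UnmarkedEdge)
                                  (Seq (IfC (R Reduce) (R SetFlag) Skip) (R Finish))))
                       (R Unroot1))))
          (Seq (IfC (R Flag) Fail Skip)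
               (Seq (R DeleteCounter) (Loop (R NoDegInv))))"

definition bellman_ford :: cmd where
  "bellman_ford = Seq (R SetCounter)
     (Seq (Loop (R Count))
        (Seq (Loop (Seq (R Decrement) (Seq (Loop Relax) (Loop Clean)))) Final))"

definition bf_input :: "hgraph \<Rightarrow> bool" where
  "bf_input g \<longleftrightarrow> wf_graph g \<and>
     (\<forall>v\<in>V g. nmk g v = NGrey) \<and> card (rt g) = 1 \<and>
     (\<forall>e\<in>E g. emk g e = EUnm \<and> is_int_label (elab g e) \<and> src g e \<noteq> tgt g e)"

end

theory Submission
  imports Defs
begin


definition ht :: "(hgraph \<Rightarrow> nat \<Rightarrow> bool) \<Rightarrow> cmd \<Rightarrow> (hgraph \<Rightarrow> nat \<Rightarrow> bool) \<Rightarrow> (hgraph \<Rightarrow> nat \<Rightarrow> bool) \<Rightarrow> bool" where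
"ht P c Q F \<longleftrightarrow> (\<forall>g b. P g b \<longrightarrow> (\<exists>r. exec c g b r) \<and> \<not> exec c g b Out \<and>
   (\<forall>g' b'. exec c g b (Done (Some g') b') \<longrightarrow> Q g' b') \<and> (\<forall>b'. exec c g b (Done None b') \<longrightarrow> F g b'))"

inductive_cases seqE: "exec (Seq c1 c2) g b r"
inductive_cases seqOE: "exec (Seq c1 c2) g b Out"
inductive_cases seqSE: "exec (Seq c1 c2) g b (Done (Some g') b')"
inductive_cases seqNE: "exec (Seq c1 c2) g b (Done None b')"
inductive_cases loopOE: "exec (Loop c) g b Out"
inductive_cases loopSE: "exec (Loop c) g b (Done (Some g') b')"
inductive_cases loopNE: "exec (Loop c) g b (Done None b')"
inductive_cases tryOE: "exec (Try c p q) g b Out"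
inductive_cases trySE: "exec (Try c p q) g b (Done (Some g') b')"
inductive_cases tryNE: "exec (Try c p q) g b (Done None b')"
inductive_cases ifOE: "exec (IfC c p q) g b Out"
inductive_cases ifSE: "exec (IfC c p q) g b (Done (Some g') b')"
inductive_cases ifNE: "exec (IfC c p q) g b (Done None b')"
inductive_cases callE: "exec (Call rs) g b r"
inductive_cases skipE: "exec Skip g b r"
inductive_cases failE: "exec Fail g b r"

lemma ht_call:
  assumes "\<And>g b. P g b \<Longrightarrow> set_step rs g \<noteq> {}"
    and "\<And>g b res c. P g b \<Longrightarrow> (res, c) \<in> set_step rs g \<Longrightarrow> c \<le> b \<and> (\<forall>g'. res = Some g' \<longrightarrow> Q g' (b - c)) \<and> (res = None \<longrightarrow> F g (b - c))"
  shows "ht P (Call rs) Q F"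
  unfolding ht_def
  apply (intro allI impI conjI)
  subgoal for g b using assms(1)[of g b] assms(2)[of g b] by (fastforce intro: exec.intros)
  subgoal for g b by (auto elim!: callE dest: assms(2)[of g b])
  subgoal for g b by (auto elim!: callE dest: assms(2)[of g b])
  subgoal for g b by (auto elim!: callE dest: assms(2)[of g b])
  done

lemma ht_seq:
  assumes "ht P c1 Q F" "ht Q c2 Rr (\<lambda>_ _. False)"
  shows "ht P (Seq c1 c2) Rr F"
  using assms unfolding ht_def
  apply (intro allI impI conjI)
  subgoal by (metis exec.intros outcome.exhaust option.exhaust)
  subgoal by (intro notI, erule seqOE; blast)
  subgoal by (erule seqSE; blast)
  subgoal by (erule seqNE; blast)
  done

lemma ht_seq_any:
  assumes "ht P c1 Q F" "ht Q c2 Rr F2"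
  shows "ht P (Seq c1 c2) Rr (\<lambda>_ _. True)"
  using assms unfolding ht_def
  apply (intro allI impI conjI)
  subgoal by (metis exec.intros outcome.exhaust option.exhaust)
  subgoal by (intro notI, erule seqOE; blast)
  subgoal by (erule seqSE; blast)
  subgoal by simp
  done

fun starts_call :: "cmd \<Rightarrow> bool" where
  "starts_call (Call rs) = (rs \<noteq> [])"
| "starts_call (Seq c1 c2) = starts_call c1"
| "starts_call _ = False"

lemma scan_list_pos: "p \<in> scan_list xs k \<Longrightarrow> 0 < snd p"
  by (induction xs arbitrary: p) auto

lemma scan_pos: "p \<in> scan S k \<Longrightarrow> 0 < snd p"
  unfolding scan_def using scan_list_pos by blast

lemma search_pos: "p \<in> search r g \<Longrightarrow> 0 < snd p"
  by (cases r) (auto dest: scan_pos)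

lemma rule_step_pos: "(res, c) \<in> rule_step r g \<Longrightarrow> 0 < c"
  unfolding rule_step_def by (auto dest: search_pos)

lemma set_step_pos: "rs \<noteq> [] \<Longrightarrow> (res, c) \<in> set_step rs g \<Longrightarrow> 0 < c"
  by (cases rs) (auto dest: rule_step_pos)

lemma exec_mono: "exec c g b r \<Longrightarrow> r = Done x b' \<Longrightarrow> b' \<le> b"
  by (induction arbitrary: x b' rule: exec.induct) force+

lemma exec_mono': "exec c g b (Done x b') \<Longrightarrow> b' \<le> b"
  using exec_mono by blast

lemma exec_strict: "exec c g b (Done (Some g') b') \<Longrightarrow> starts_call c \<Longrightarrow> b' < b"
proof (induction c arbitrary: g b g' b')
  case (Call rs) then show ?case by (auto elim!: callE dest: set_step_pos)
next
  case (Seq c1 c2)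
  from Seq.prems(1) obtain g1 b1 where a: "exec c1 g b (Done (Some g1) b1)" "exec c2 g1 b1 (Done (Some g') b')"
    by (rule seqSE)
  have "b1 < b" using Seq.IH(1)[OF a(1)] Seq.prems(2) by simp
  moreover have "b' \<le> b1" using exec_mono'[OF a(2)] .
  ultimately show ?case by simp
qed auto

lemma ht_loop:
  assumes "starts_call c" "ht I c I F"
  shows "ht I (Loop c) F (\<lambda>_ _. False)"
  unfolding ht_def
proof (intro allI)
  fix g b
  show "I g b \<longrightarrow> (\<exists>r. exec (Loop c) g b r) \<and> \<not> exec (Loop c) g b Out \<and>
   (\<forall>g' b'. exec (Loop c) g b (Done (Some g') b') \<longrightarrow> F g' b') \<and> (\<forall>b'. exec (Loop c) g b (Done None b') \<longrightarrow> False)"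
  proof (induction b arbitrary: g rule: less_induct)
    case (less b)
    show ?case
    proof
      assume Ig: "I g b"
      from assms(2) Ig have H: "(\<exists>r. exec c g b r) \<and> \<not> exec c g b Out \<and>
       (\<forall>g' b'. exec c g b (Done (Some g') b') \<longrightarrow> I g' b') \<and> (\<forall>b'. exec c g b (Done None b') \<longrightarrow> F g b')"
        unfolding ht_def by blast
      have S: "\<And>g' b'. exec c g b (Done (Some g') b') \<Longrightarrow> b' < b \<and> I g' b'"
        using H exec_strict assms(1) by blast
      then obtain r where r: "exec c g b r" using H by blast
      have ex: "\<exists>r. exec (Loop c) g b r"
      proof (cases r)
        case (Done x b')
        show ?thesis
        proof (cases x)
          case None then show ?thesis using r Done by (blast intro: exec.intros)
        next
          case (Some g')
          then obtain r' where "exec (Loop c) g' b' r'" using less S r Done by blast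
          then show ?thesis using r Done Some by (blast intro: exec.intros)
        qed
      next
        case Out then show ?thesis using H r by blast
      qed
      have no: "\<not> exec (Loop c) g b Out"
        apply (intro notI)
        apply (erule loopOE)
        using H apply blast
        using S less by blast
      have po: "\<forall>g'' b''. exec (Loop c) g b (Done (Some g'') b'') \<longrightarrow> F g'' b''"
        apply (intro allI impI)
        apply (erule loopSE)
        using H apply blast
        using S less by blast
      have pn: "\<forall>b''. exec (Loop c) g b (Done None b'') \<longrightarrow> False"
        apply (intro allI impI)
        apply (erule loopNE)
        using S less by blast
      show "(\<exists>r. exec (Loop c) g b r) \<and> \<not> exec (Loop c) g b Out \<and>
       (\<forall>g' b'. exec (Loop c) g b (Done (Some g') b') \<longrightarrow> F g' b') \<and> (\<forall>b'. exec (Loop c) g b (Done None b') \<longrightarrow> False)"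
        using ex no po pn by blast
    qed
  qed
qed

lemma ht_try:
  assumes "ht P C Q1 F1" "ht Q1 T Rr (\<lambda>_ _. False)" "ht F1 El Rr (\<lambda>_ _. False)"
  shows "ht P (Try C T El) Rr (\<lambda>_ _. False)"
  using assms unfolding ht_def
  apply (intro allI impI conjI)
  subgoal by (metis exec.intros outcome.exhaust option.exhaust)
  subgoal by (intro notI, erule tryOE; blast)
  subgoal by (erule trySE; blast)
  subgoal by (erule tryNE; blast)
  done

lemma ht_if:
  assumes "\<And>g0. ht (\<lambda>g b. P g b \<and> g = g0) C (\<lambda>_ b. T g0 b) El"
    "ht T Pc Rr Fa" "ht El Qc Rr Fb"
  shows "ht P (IfC C Pc Qc) Rr (\<lambda>g b. Fa g b \<or> Fb g b)"
  unfolding ht_def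
proof (intro allI impI)
  fix g b assume P: "P g b"
  have H: "(\<exists>r. exec C g b r) \<and> \<not> exec C g b Out \<and>
   (\<forall>g' b'. exec C g b (Done (Some g') b') \<longrightarrow> T g b') \<and> (\<forall>b'. exec C g b (Done None b') \<longrightarrow> El g b')"
    using assms(1)[of g] P unfolding ht_def by blast
  show "(\<exists>r. exec (IfC C Pc Qc) g b r) \<and> \<not> exec (IfC C Pc Qc) g b Out \<and>
   (\<forall>g' b'. exec (IfC C Pc Qc) g b (Done (Some g') b') \<longrightarrow> Rr g' b') \<and> (\<forall>b'. exec (IfC C Pc Qc) g b (Done None b') \<longrightarrow> Fa g b' \<or> Fb g b')"
    using H assms(2,3) unfolding ht_def
    apply (intro conjI allI impI)
    subgoal by (metis exec.intros outcome.exhaust option.exhaust)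
    subgoal by (intro notI, erule ifOE; blast)
    subgoal by (erule ifSE; blast)
    subgoal by (erule ifNE; blast)
    done
qed

lemma ht_skip: "ht P Skip P F"
  unfolding ht_def by (auto intro: exec.intros elim!: skipE)

lemma ht_fail: "ht P Fail Q P"
  unfolding ht_def by (auto intro: exec.intros elim!: failE)

lemma ht_conseq:
  assumes "ht P c Q F" "\<And>g b. P' g b \<Longrightarrow> P g b" "\<And>g b. Q g b \<Longrightarrow> Q' g b" "\<And>g b. F g b \<Longrightarrow> F' g b"
  shows "ht P' c Q' F'"
  using assms unfolding ht_def by meson

section \<open>Scans\<close>

lemma scan_list_Some: "(Some r, c) \<in> scan_list xs k \<Longrightarrow> \<exists>x\<in>set xs. \<exists>c'. (Some r, c') \<in> k x"
  by (induction xs arbitrary: c) auto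

lemma scan_list_None: "(None, c) \<in> scan_list xs k \<Longrightarrow> x \<in> set xs \<Longrightarrow> \<exists>c'. (None, c') \<in> k x"
  by (induction xs arbitrary: c) auto

lemma scan_Some: "(Some r, c) \<in> scan S k \<Longrightarrow> \<exists>x\<in>S. \<exists>c'. (Some r, c') \<in> k x"
  unfolding scan_def by (auto dest: scan_list_Some)

lemma scan_None: "(None, c) \<in> scan S k \<Longrightarrow> x \<in> S \<Longrightarrow> \<exists>c'. (None, c') \<in> k x"
  unfolding scan_def by (auto dest: scan_list_None)

lemma scan_list_ne: "(\<And>x. x \<in> set xs \<Longrightarrow> k x \<noteq> {}) \<Longrightarrow> scan_list xs k \<noteq> {}"
proof (induction xs)
  case (Cons x xs)
  have "k x \<noteq> {}" using Cons.prems by simp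
  then obtain p where p: "p \<in> k x" by blast
  show ?case
  proof (cases "fst p")
    case None
    have "scan_list xs k \<noteq> {}" using Cons.IH Cons.prems by auto
    then obtain q where "q \<in> scan_list xs k" by auto
    then show ?thesis using p None by (cases p, cases q) auto
  next
    case (Some r) then show ?thesis using p by (cases p) auto
  qed
qed simp

lemma scan_ne: "finite S \<Longrightarrow> (\<And>x. x \<in> S \<Longrightarrow> k x \<noteq> {}) \<Longrightarrow> scan S k \<noteq> {}"
  unfolding scan_def using finite_distinct_list[of S] scan_list_ne[of _ k] by auto

lemma chk_ne: "K \<noteq> {} \<Longrightarrow> chk P K \<noteq> {}"
  unfolding chk_def by auto

lemma found_ne: "found r \<noteq> {}"
  unfolding found_def by auto

lemma chk_Some[simp]: "(Some r, c) \<in> chk P K \<longleftrightarrow> P \<and> (\<exists>c'. c = Suc c' \<and> (Some r, c') \<in> K)"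
  unfolding chk_def by auto

lemma chk_None[simp]: "(None, c) \<in> chk P K \<longleftrightarrow> (P \<and> (\<exists>c'. c = Suc c' \<and> (None, c') \<in> K)) \<or> (\<not> P \<and> c = 1)"
  unfolding chk_def by auto

lemma found_simps[simp]: "(Some r, c) \<in> found r' \<longleftrightarrow> r = r' \<and> c = 0" "(None, c) \<notin> found r'"
  unfolding found_def by auto

definition bnd :: "nat \<Rightarrow> ('a \<times> nat) set \<Rightarrow> bool" where
  "bnd K S \<longleftrightarrow> (\<forall>p\<in>S. snd p \<le> K)"

definition allsome :: "('a option \<times> nat) set \<Rightarrow> bool" where
  "allsome S \<longleftrightarrow> (\<forall>p\<in>S. fst p \<noteq> None)"

lemma bnd_found: "bnd 0 (found r)" unfolding bnd_def found_def by auto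
lemma allsome_found: "allsome (found r)" unfolding allsome_def found_def by auto
lemma bnd_chk: "bnd K k \<Longrightarrow> bnd (Suc K) (chk P k)" unfolding bnd_def chk_def by auto
lemma allsome_chk: "allsome k \<Longrightarrow> allsome (chk True k)" unfolding allsome_def chk_def by auto
lemma bnd_mono: "bnd K S \<Longrightarrow> K \<le> K' \<Longrightarrow> bnd K' S" unfolding bnd_def by auto

lemma bnd_scan_list_all: "(\<And>x. x \<in> set xs \<Longrightarrow> bnd K (k x) \<and> allsome (k x)) \<Longrightarrow> bnd (Suc K) (scan_list xs k)"
proof (induction xs)
  case Nil then show ?case by (simp add: bnd_def)
next
  case (Cons x xs)
  then have "bnd K (k x)" "allsome (k x)" by auto
  then show ?case unfolding bnd_def allsome_def by fastforce
qed

lemma bnd_scan_all: "(\<And>x. x \<in> S \<Longrightarrow> bnd K (k x)) \<Longrightarrow> (\<And>x. x \<in> S \<Longrightarrow> allsome (k x)) \<Longrightarrow> bnd (Suc K) (scan S k)"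
  unfolding scan_def using bnd_scan_list_all[of _ K k] by (fastforce simp: bnd_def)

lemma bnd_scan_list1: "length xs \<le> 1 \<Longrightarrow> (\<And>x. x \<in> set xs \<Longrightarrow> bnd K (k x)) \<Longrightarrow> bnd (Suc (Suc K)) (scan_list xs k)"
  apply (cases xs)
   apply (simp add: bnd_def)
  by (auto simp: bnd_def)

lemma bnd_scan1: "card S \<le> 1 \<Longrightarrow> (\<And>x. x \<in> S \<Longrightarrow> bnd K (k x)) \<Longrightarrow> bnd (Suc (Suc K)) (scan S k)"
  unfolding scan_def using bnd_scan_list1[of _ K k] distinct_card
  by (fastforce simp: bnd_def)


lemma bnd_chk': "bnd (K - 1) k \<Longrightarrow> 0 < K \<Longrightarrow> bnd K (chk P k)"
  using bnd_chk[of "K - 1" k P] by simp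
lemma bnd_found': "bnd K (found r)" unfolding bnd_def found_def by auto
lemma bnd_scan1': "card S \<le> 1 \<Longrightarrow> (\<And>x. x \<in> S \<Longrightarrow> bnd (K - 2) (k x)) \<Longrightarrow> 2 \<le> K \<Longrightarrow> bnd K (scan S k)"
proof -
  assume a: "card S \<le> 1" "\<And>x. x \<in> S \<Longrightarrow> bnd (K - 2) (k x)" "2 \<le> K"
  have "Suc (Suc (K - 2)) = K" using a(3) by arith
  then show ?thesis using bnd_scan1[of S "K - 2" k, OF a(1) a(2)] by simp
qed
lemma bnd_scan_all': "(\<And>x. x \<in> S \<Longrightarrow> bnd (K - 1) (k x)) \<Longrightarrow> (\<And>x. x \<in> S \<Longrightarrow> allsome (k x)) \<Longrightarrow> 1 \<le> K \<Longrightarrow> bnd K (scan S k)"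
proof -
  assume a: "\<And>x. x \<in> S \<Longrightarrow> bnd (K - 1) (k x)" "\<And>x. x \<in> S \<Longrightarrow> allsome (k x)" "1 \<le> K"
  have "Suc (K - 1) = K" using a(3) by arith
  then show ?thesis using bnd_scan_all[of S "K - 1" k, OF a(1) a(2)] by simp
qed

definition sane :: "hgraph \<Rightarrow> bool" where
  "sane g \<longleftrightarrow> card (roots g) \<le> 1 \<and> card (nodes_mk g NGreen) \<le> 1 \<and>
     (\<forall>v. card (out_mk g v ERed) \<le> 1) \<and> (\<forall>v. card (out_mk g v EDashed) \<le> 1)"

lemma allsome_scan: "S \<noteq> {} \<Longrightarrow> (\<And>x. x \<in> S \<Longrightarrow> allsome (k x)) \<Longrightarrow> allsome (scan S k)"
proof -
  assume a: "S \<noteq> {}" "\<And>x. x \<in> S \<Longrightarrow> allsome (k x)"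
  then obtain x where x: "x \<in> S" by blast
  have "(None, c) \<notin> scan S k" for c
  proof
    assume "(None, c) \<in> scan S k"
    from scan_None[OF this x] obtain c' where "(None, c') \<in> k x" by blast
    with a(2)[OF x] show False unfolding allsome_def by fastforce
  qed
  then show ?thesis unfolding allsome_def by (metis prod.collapse)
qed
lemma allsome_chk2: "P \<Longrightarrow> allsome k \<Longrightarrow> allsome (chk P k)" unfolding allsome_def chk_def by auto

lemma bs_SetCounter: "sane g \<Longrightarrow> bnd 6 (search SetCounter g)"
  by simp (intro bnd_scan1' bnd_chk' bnd_found'; simp add: sane_def)

lemma bs_Decrement: "sane g \<Longrightarrow> bnd 6 (search Decrement g)"
  by simp (intro bnd_scan1' bnd_chk' bnd_found'; simp add: sane_def)

lemma bs_Root1: "sane g \<Longrightarrow> bnd 6 (search Root1 g)"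
  by simp (intro bnd_scan_all' bnd_chk' bnd_found' allsome_chk allsome_found; simp)

lemma bs_NoDeg: "sane g \<Longrightarrow> bnd 6 (search NoDeg g)"
  by simp (intro bnd_scan1' bnd_chk' bnd_found'; simp add: sane_def)

lemma bs_UnmarkedEdge: "sane g \<Longrightarrow> bnd 6 (search UnmarkedEdge g)"
  by simp (intro bnd_scan1' bnd_chk' bnd_scan_all' bnd_found' allsome_chk allsome_found; simp add: sane_def)

lemma bs_Unvisited: "sane g \<Longrightarrow> bnd 6 (search Unvisited g)"
  by simp (intro bnd_scan1' bnd_chk' bnd_found'; simp add: sane_def)

lemma bs_Reduce: "sane g \<Longrightarrow> bnd 6 (search Reduce g)"
  by simp (intro bnd_scan1' bnd_chk' bnd_found'; simp add: sane_def)

lemma bs_Finish: "sane g \<Longrightarrow> bnd 6 (search Finish g)"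
  by simp (intro bnd_scan1' bnd_chk' bnd_found'; simp add: sane_def)

lemma bs_Unroot1: "sane g \<Longrightarrow> bnd 6 (search Unroot1 g)"
  by simp (intro bnd_scan1' bnd_chk' bnd_found'; simp add: sane_def)

lemma bs_Root2: "sane g \<Longrightarrow> bnd 6 (search Root2 g)"
  by simp (intro bnd_scan_all' bnd_chk' bnd_found' allsome_chk allsome_found; simp)

lemma bs_UnmarkEdge: "sane g \<Longrightarrow> bnd 6 (search UnmarkEdge g)"
  by simp (intro bnd_scan1' bnd_chk' bnd_scan_all' bnd_found' allsome_chk allsome_found; simp add: sane_def)

lemma bs_Unroot2: "sane g \<Longrightarrow> bnd 6 (search Unroot2 g)"
  by simp (intro bnd_scan1' bnd_chk' bnd_found'; simp add: sane_def)

lemma bs_SetFlag: "sane g \<Longrightarrow> bnd 6 (search SetFlag g)"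
  by simp (intro bnd_scan_all' bnd_chk' bnd_found' allsome_chk allsome_found; simp)

lemma bs_Flag: "sane g \<Longrightarrow> bnd 6 (search Flag g)"
  by simp (intro bnd_scan1' bnd_chk' bnd_found'; simp add: sane_def)

lemma bs_DeleteCounter: "sane g \<Longrightarrow> bnd 6 (search DeleteCounter g)"
  by simp (intro bnd_scan1' bnd_chk' bnd_found'; simp add: sane_def)

lemma bs_NoDegInv: "sane g \<Longrightarrow> bnd 6 (search NoDegInv g)"
  by simp (intro bnd_scan_all' bnd_chk' bnd_found' allsome_chk allsome_found; simp)


lemma bs_Count: "sane g \<Longrightarrow> nodes_mk g NGreen = {u} \<Longrightarrow> is_int_label (nlab g u) \<Longrightarrow> bnd 6 (search Count g)"
  by simp (intro bnd_scan_all' allsome_chk allsome_scan allsome_chk2 allsome_found bnd_chk' bnd_scan1' bnd_found'; simp add: sane_def)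

lemma bnd_rule_step: "bnd 6 (search r g) \<Longrightarrow> bnd 7 (rule_step r g)"
  unfolding bnd_def rule_step_def by auto

lemma set_step_single: "set_step [r] g = rule_step r g"
proof -
  have "p \<in> set_step [r] g \<longleftrightarrow> p \<in> rule_step r g" for p
    by (cases p; cases "fst p") auto
  then show ?thesis by blast
qed

lemma bnd_set_step2: "bnd 7 (rule_step r1 g) \<Longrightarrow> bnd 7 (rule_step r2 g) \<Longrightarrow> bnd 14 (set_step [r1, r2] g)"
  unfolding bnd_def set_step.simps by fastforce

lemma rs_Some: "(Some g', c) \<in> rule_step r g \<longleftrightarrow> (\<exists>m c0. c = Suc c0 \<and> (Some m, c0) \<in> search r g \<and> g' \<in> app r g m)"
  unfolding rule_step_def by auto
lemma rs_None: "(None, c) \<in> rule_step r g \<longleftrightarrow> (None, c) \<in> search r g"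
  unfolding rule_step_def by auto

lemma search_ne: "finite (V g) \<Longrightarrow> finite (E g) \<Longrightarrow> search r g \<noteq> {}"
  by (induction r; simp only: search.simps; intro scan_ne chk_ne found_ne; simp add: nodes_mk_def roots_def out_mk_def)

lemma ch_SetCounter: "(Some m, c) \<in> search SetCounter g \<Longrightarrow> \<exists>v\<in>roots g. nmk g v = NGrey \<and> m = [v]"
  by (auto dest!: scan_Some)
lemma ch_Count_S: "(Some m, c) \<in> search Count g \<Longrightarrow> \<exists>v\<in>nodes_mk g NGrey. \<exists>u\<in>nodes_mk g NGreen. is_int_label (nlab g u) \<and> m = [v, u]"
  by (auto dest!: scan_Some)
lemma ch_Count_N: "(None, c) \<in> search Count g \<Longrightarrow> v \<in> nodes_mk g NGrey \<Longrightarrow> u \<in> nodes_mk g NGreen \<Longrightarrow> \<not> is_int_label (nlab g u)"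
  by (auto dest!: scan_None)
lemma ch_Dec_S: "(Some m, c) \<in> search Decrement g \<Longrightarrow> \<exists>u\<in>nodes_mk g NGreen. (\<exists>i. nlab g u = [AInt i] \<and> i > 0) \<and> m = [u]"
  by (auto dest!: scan_Some)
lemma ch_Dec_N: "(None, c) \<in> search Decrement g \<Longrightarrow> u \<in> nodes_mk g NGreen \<Longrightarrow> \<not> (\<exists>i. nlab g u = [AInt i] \<and> i > 0)"
  by (auto dest!: scan_None)
lemma ch_Root1_S: "(Some m, c) \<in> search Root1 g \<Longrightarrow> \<exists>v\<in>nodes_mk g NBlue. m = [v]"
  by (auto dest!: scan_Some)
lemma ch_Root1_N: "(None, c) \<in> search Root1 g \<Longrightarrow> nodes_mk g NBlue = {}"
  by (rule equals0I) (auto dest: scan_None)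
lemma ch_NoDeg_S: "(Some m, c) \<in> search NoDeg g \<Longrightarrow> \<exists>v\<in>roots g. nmk g v = NBlue \<and> (\<forall>e\<in>E g. src g e \<noteq> v \<and> tgt g e \<noteq> v) \<and> m = [v]"
  by (auto dest!: scan_Some)
lemma ch_NoDeg_N: "(None, c) \<in> search NoDeg g \<Longrightarrow> v \<in> roots g \<Longrightarrow> nmk g v = NBlue \<Longrightarrow> \<exists>e\<in>E g. src g e = v \<or> tgt g e = v"
  by (auto dest!: scan_None)
lemma ch_UE_S: "(Some m, c) \<in> search UnmarkedEdge g \<Longrightarrow> \<exists>v\<in>roots g. nmk g v = NBlue \<and> (\<exists>e\<in>out_mk g v EUnm. m = [v, tgt g e, e])"
  by (auto dest!: scan_Some)
lemma ch_UE_N: "(None, c) \<in> search UnmarkedEdge g \<Longrightarrow> v \<in> roots g \<Longrightarrow> nmk g v = NBlue \<Longrightarrow> out_mk g v EUnm = {}"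
  by (auto dest!: scan_None)
lemma ch_Unv_S: "(Some m, c) \<in> search Unvisited g \<Longrightarrow> \<exists>v\<in>roots g. \<exists>e\<in>out_mk g v ERed. m = [v, tgt g e, e]"
  by (auto dest!: scan_Some)
lemma ch_Red_S: "(Some m, c) \<in> search Reduce g \<Longrightarrow> \<exists>v\<in>roots g. \<exists>e\<in>out_mk g v ERed. m = [v, tgt g e, e]"
  by (auto dest!: scan_Some)
lemma ch_Fin_S: "(Some m, c) \<in> search Finish g \<Longrightarrow> \<exists>v\<in>roots g. nmk g v = NBlue \<and> (\<exists>e\<in>out_mk g v ERed. m = [v, tgt g e, e])"
  by (auto dest!: scan_Some)
lemma ch_Fin_N: "(None, c) \<in> search Finish g \<Longrightarrow> v \<in> roots g \<Longrightarrow> nmk g v = NBlue \<Longrightarrow> out_mk g v ERed = {}"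
  by (auto dest!: scan_None)
lemma ch_Unroot1_S: "(Some m, c) \<in> search Unroot1 g \<Longrightarrow> \<exists>v\<in>roots g. nmk g v = NBlue \<and> m = [v]"
  by (auto dest!: scan_Some)
lemma ch_Unroot1_N: "(None, c) \<in> search Unroot1 g \<Longrightarrow> v \<in> roots g \<Longrightarrow> nmk g v \<noteq> NBlue"
  by (auto dest!: scan_None)
lemma ch_Root2_S: "(Some m, c) \<in> search Root2 g \<Longrightarrow> \<exists>v\<in>nodes_mk g NGrey. m = [v]"
  by (auto dest!: scan_Some)
lemma ch_Root2_N: "(None, c) \<in> search Root2 g \<Longrightarrow> nodes_mk g NGrey = {}"
  by (rule equals0I) (auto dest: scan_None)
lemma ch_UM_S: "(Some m, c) \<in> search UnmarkEdge g \<Longrightarrow> \<exists>v\<in>roots g. nmk g v = NBlue \<and> (\<exists>e\<in>out_mk g v EBlue. m = [v, tgt g e, e])"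
  by (auto dest!: scan_Some)
lemma ch_Unroot2_S: "(Some m, c) \<in> search Unroot2 g \<Longrightarrow> \<exists>v\<in>roots g. nmk g v = NBlue \<and> m = [v]"
  by (auto dest!: scan_Some)
lemma ch_Unroot2_N: "(None, c) \<in> search Unroot2 g \<Longrightarrow> v \<in> roots g \<Longrightarrow> nmk g v \<noteq> NBlue"
  by (auto dest!: scan_None)
lemma ch_SetFlag_S: "(Some m, c) \<in> search SetFlag g \<Longrightarrow> \<exists>u\<in>nodes_mk g NGreen. m = [u]"
  by (auto dest!: scan_Some)
lemma ch_DC_S: "(Some m, c) \<in> search DeleteCounter g \<Longrightarrow> \<exists>u\<in>nodes_mk g NGreen. \<exists>e\<in>out_mk g u EDashed. m = [tgt g e, u, e]"
  by (auto dest!: scan_Some)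
lemma ch_NDI_S: "(Some m, c) \<in> search NoDegInv g \<Longrightarrow> \<exists>v\<in>nodes_mk g NUnm. m = [v]"
  by (auto dest!: scan_Some)

lemma app_ne:
  assumes "(Some m, c) \<in> search r g" "finite (V g)" "finite (E g)"
  shows "app r g m \<noteq> {}"
proof (cases r)
  case SetCounter
  obtain a where "a \<notin> V g" using ex_new_if_finite[OF infinite_UNIV_nat assms(2)] by blast
  moreover obtain e where "e \<notin> E g" using ex_new_if_finite[OF infinite_UNIV_nat assms(3)] by blast
  ultimately show ?thesis using SetCounter by (auto simp: Let_def)
next
  case Count then show ?thesis using assms(1) by (auto dest!: scan_Some simp: Let_def is_int_label_def)
next
  case Decrement then show ?thesis using assms(1) by (auto dest!: scan_Some simp: Let_def)
next
  case Unvisited then show ?thesis using assms(1) by (auto dest!: scan_Some simp: Let_def is_int_label_def int_suffix_def)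
next
  case Reduce then show ?thesis using assms(1) by (auto dest!: scan_Some simp: Let_def)
qed simp_all

lemma rule_step_ne: "finite (V g) \<Longrightarrow> finite (E g) \<Longrightarrow> rule_step r g \<noteq> {}"
proof -
  assume f: "finite (V g)" "finite (E g)"
  obtain p where p: "p \<in> search r g" using search_ne[OF f] by blast
  show ?thesis
  proof (cases "fst p")
    case None then show ?thesis using p unfolding rule_step_def by (cases p) auto
  next
    case (Some m)
    then have "(Some m, snd p) \<in> search r g" using p by (cases p) auto
    moreover from app_ne[OF this f] obtain g' where "g' \<in> app r g m" by blast
    ultimately show ?thesis unfolding rule_step_def by blast
  qed
qed


lemma bs_NDI': "bnd 6 (search NoDegInv g)"
  by simp (intro bnd_scan_all' bnd_chk' bnd_found' allsome_chk allsome_found; simp)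

lemma bnd_rs: "sane g \<Longrightarrow> r \<noteq> Count \<Longrightarrow> bnd 7 (rule_step r g)"
  apply (rule bnd_rule_step)
  apply (cases r)
  using bs_SetCounter bs_Decrement bs_Root1 bs_NoDeg bs_UnmarkedEdge bs_Unvisited bs_Reduce bs_Finish
    bs_Unroot1 bs_Root2 bs_UnmarkEdge bs_Unroot2 bs_SetFlag bs_Flag bs_DeleteCounter bs_NoDegInv
  by simp_all

lemma ht_R:
  assumes "\<And>g b. P g b \<Longrightarrow> finite (V g) \<and> finite (E g) \<and> bnd 7 (rule_step r g) \<and> 7 \<le> b"
    "\<And>g b m c g' b'. P g b \<Longrightarrow> (Some m, c) \<in> search r g \<Longrightarrow> g' \<in> app r g m \<Longrightarrow> b \<le> b' + 7 \<Longrightarrow> Q g' b'"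
    "\<And>g b c b'. P g b \<Longrightarrow> (None, c) \<in> search r g \<Longrightarrow> b \<le> b' + 7 \<Longrightarrow> F g b'"
  shows "ht P (R r) Q F"
proof (rule ht_call)
  fix g b assume "P g b"
  then have "rule_step r g \<noteq> {}" using assms(1) rule_step_ne by blast
  then show "set_step [r] g \<noteq> {}" by (subst set_step_single) assumption
next
  fix g b res c assume P: "P g b" and rc: "(res, c) \<in> set_step [r] g"
  have rc': "(res, c) \<in> rule_step r g" using rc unfolding set_step_single by blast
  have cb: "c \<le> 7" "7 \<le> b" using assms(1)[OF P] rc' unfolding bnd_def by force+
  show "c \<le> b \<and> (\<forall>g'. res = Some g' \<longrightarrow> Q g' (b - c)) \<and> (res = None \<longrightarrow> F g (b - c))"
  proof (intro conjI allI impI)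
    show "c \<le> b" using cb by simp
  next
    fix g' assume "res = Some g'"
    then obtain m c0 where "(Some m, c0) \<in> search r g" "g' \<in> app r g m" using rc' rs_Some by blast
    then show "Q g' (b - c)" using assms(2)[OF P] cb by simp
  next
    assume "res = None"
    then have "(None, c) \<in> search r g" using rc' rs_None by simp
    then show "F g (b - c)" using assms(3)[OF P] cb by simp
  qed
qed

lemma set_step2_eq: "set_step [r1, r2] g = {(Some g', c) | g' c. (Some g', c) \<in> rule_step r1 g} \<union>
     {(res, c + c') | c res c'. (None, c) \<in> rule_step r1 g \<and> (res, c') \<in> rule_step r2 g}"
  by (simp only: set_step.simps(2)[of r1 "[r2]" g] set_step_single)

lemma set_step2_Some: "(Some g', c) \<in> set_step [r1, r2] g \<Longrightarrow> \<exists>c'. (Some g', c') \<in> rule_step r1 g \<or> (Some g', c') \<in> rule_step r2 g"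
  unfolding set_step2_eq by blast

lemma ht_R2:
  assumes "\<And>g b. P g b \<Longrightarrow> finite (V g) \<and> finite (E g) \<and> bnd 7 (rule_step r1 g) \<and> bnd 7 (rule_step r2 g) \<and> 14 \<le> b"
    "\<And>g b m c g' b' r. P g b \<Longrightarrow> r \<in> {r1, r2} \<Longrightarrow> (Some m, c) \<in> search r g \<Longrightarrow> g' \<in> app r g m \<Longrightarrow> b \<le> b' + 14 \<Longrightarrow> Q g' b'"
    "\<And>g b b'. P g b \<Longrightarrow> b \<le> b' + 14 \<Longrightarrow> F g b'"
  shows "ht P (Call [r1, r2]) Q F"
proof (rule ht_call)
  fix g b assume P: "P g b"
  have "finite (V g)" "finite (E g)" using assms(1)[OF P] by auto
  then have "rule_step r1 g \<noteq> {}" "rule_step r2 g \<noteq> {}" using rule_step_ne by auto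
  then obtain a1 c1 a2 c2 where p: "(a1, c1) \<in> rule_step r1 g" "(a2, c2) \<in> rule_step r2 g" by auto
  show "set_step [r1, r2] g \<noteq> {}"
  proof (cases a1)
    case None
    then have "(a2, c1 + c2) \<in> set_step [r1, r2] g"
      unfolding set_step2_eq using p by (intro UnI2) blast
    then show ?thesis by blast
  next
    case (Some x)
    then have "(a1, c1) \<in> set_step [r1, r2] g"
      unfolding set_step2_eq using p by (intro UnI1) blast
    then show ?thesis by blast
  qed
next
  fix g b res c assume P: "P g b" and rc: "(res, c) \<in> set_step [r1, r2] g"
  have "bnd 14 (set_step [r1, r2] g)" using assms(1)[OF P] bnd_set_step2 by blast
  then have c14: "c \<le> 14" using rc unfolding bnd_def by fastforce
  have b14: "14 \<le> b" using assms(1)[OF P] by blast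
  show "c \<le> b \<and> (\<forall>g'. res = Some g' \<longrightarrow> Q g' (b - c)) \<and> (res = None \<longrightarrow> F g (b - c))"
  proof (intro conjI allI impI)
    show "c \<le> b" using c14 b14 by simp
  next
    fix g' assume "res = Some g'"
    then obtain c' where "(Some g', c') \<in> rule_step r1 g \<or> (Some g', c') \<in> rule_step r2 g"
      using rc set_step2_Some by blast
    then obtain r where r0: "r \<in> {r1, r2}" "(Some g', c') \<in> rule_step r g" by blast
    from r0(2) obtain m c0 where "(Some m, c0) \<in> search r g" "g' \<in> app r g m"
      unfolding rs_Some by blast
    with r0(1) have r: "r \<in> {r1, r2}" "(Some m, c0) \<in> search r g" "g' \<in> app r g m" by auto
    have "b \<le> (b - c) + 14" using c14 by simp
    then show "Q g' (b - c)" by (rule assms(2)[OF P r])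
  next
    assume "res = None"
    have "b \<le> (b - c) + 14" using c14 by simp
    then show "F g (b - c)" by (rule assms(3)[OF P])
  qed
qed

definition edges_mk :: "hgraph \<Rightarrow> emark \<Rightarrow> nat set" where
  "edges_mk g \<mu> = {e \<in> E g. emk g e = \<mu>}"

definition nonisol :: "hgraph \<Rightarrow> nat \<Rightarrow> bool" where
  "nonisol g v \<longleftrightarrow> (\<exists>e\<in>E g. src g e = v \<or> tgt g e = v)"

definition core :: "nat \<Rightarrow> nat \<Rightarrow> hgraph \<Rightarrow> bool" where
  "core cn d g \<longleftrightarrow> finite (V g) \<and> finite (E g) \<and> (\<forall>e\<in>E g. src g e \<in> V g \<and> tgt g e \<in> V g) \<and>
     cn \<in> V g \<and> d \<in> E g \<and> src g d = cn \<and> tgt g d \<noteq> cn \<and> emk g d = EDashed \<and> nmk g cn = NGreen \<and>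
     (\<forall>e\<in>E g. e \<noteq> d \<longrightarrow> src g e \<noteq> cn \<and> tgt g e \<noteq> cn \<and> emk g e \<noteq> EDashed) \<and>
     (\<forall>v\<in>V g. v \<noteq> cn \<longrightarrow> nmk g v \<noteq> NGreen) \<and> cn \<notin> rt g \<and> rt g \<subseteq> V g"

lemma core_green: "core cn d g \<Longrightarrow> nodes_mk g NGreen = {cn}"
  unfolding core_def nodes_mk_def by auto

lemma core_dashed: "core cn d g \<Longrightarrow> out_mk g v EDashed \<subseteq> {d}"
  unfolding core_def out_mk_def by auto

lemma sane_of:
  assumes "core cn d g" "card (rt g) \<le> 1" "card (edges_mk g ERed) \<le> 1"
  shows "sane g"
proof -
  have f: "finite (V g)" "finite (E g)" "rt g \<subseteq> V g" using assms(1) unfolding core_def by auto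
  have "roots g = rt g" unfolding roots_def using f by auto
  then have r1: "card (roots g) \<le> 1" using assms(2) by simp
  have r2: "card (nodes_mk g NGreen) \<le> 1" using core_green[OF assms(1)] by simp
  have r3: "card (out_mk g v ERed) \<le> 1" for v
  proof -
    have "out_mk g v ERed \<subseteq> edges_mk g ERed" unfolding out_mk_def edges_mk_def by blast
    moreover have "finite (edges_mk g ERed)" unfolding edges_mk_def using f(2) by simp
    ultimately have "card (out_mk g v ERed) \<le> card (edges_mk g ERed)" by (rule card_mono[rotated])
    then show ?thesis using assms(3) by linarith
  qed
  have r4: "card (out_mk g v EDashed) \<le> 1" for v
  proof -
    have "card (out_mk g v EDashed) \<le> card {d}" by (rule card_mono) (simp_all add: core_dashed[OF assms(1)])
    then show ?thesis by simp
  qed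
  show ?thesis unfolding sane_def using r1 r2 r3 r4 by blast
qed

lemma core_upd:
  assumes "core cn d g" "V g' = V g" "E g' = E g" "src g' = src g" "tgt g' = tgt g"
    "nmk g' cn = NGreen" "\<forall>v\<in>V g. v \<noteq> cn \<longrightarrow> nmk g' v \<noteq> NGreen"
    "emk g' d = EDashed" "\<forall>e\<in>E g. e \<noteq> d \<longrightarrow> emk g' e \<noteq> EDashed" "cn \<notin> rt g'" "rt g' \<subseteq> V g"
  shows "core cn d g'"
  using assms unfolding core_def by auto

lemma card_nonisol: "finite (E g) \<Longrightarrow> card {v. nonisol g v} \<le> 2 * card (E g)"
proof -
  assume f: "finite (E g)"
  have "{v. nonisol g v} = src g ` E g \<union> tgt g ` E g" unfolding nonisol_def by auto
  then have "card {v. nonisol g v} \<le> card (src g ` E g) + card (tgt g ` E g)" by (simp add: card_Un_le)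
  also have "\<dots> \<le> card (E g) + card (E g)" by (intro add_mono card_image_le f)
  finally show ?thesis by simp
qed


definition PP :: "hgraph \<Rightarrow> nat" where "PP g = 21 + 147 * card (E g)"
definition Fin :: "hgraph \<Rightarrow> nat" where "Fin g = 35 * card (V g) + 28 * card (E g) + 35"
definition Rc :: "hgraph \<Rightarrow> nat" where "Rc g = 119 * card (E g) + 14"
definition nb :: "hgraph \<Rightarrow> nat" where "nb g = card (nodes_mk g NBlue)"
definition ngr :: "hgraph \<Rightarrow> nat" where "ngr g = card (nodes_mk g NGrey)"
definition nun :: "hgraph \<Rightarrow> nat" where "nun g = card (edges_mk g EUnm)"
definition nbe :: "hgraph \<Rightarrow> nat" where "nbe g = card (edges_mk g EBlue)"

definition base0 :: "nat \<Rightarrow> nat \<Rightarrow> hgraph \<Rightarrow> bool" where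
  "base0 cn d g \<longleftrightarrow> core cn d g \<and> edges_mk g ERed = {}"
definition gni :: "hgraph \<Rightarrow> bool" where
  "gni g \<longleftrightarrow> (\<forall>v\<in>nodes_mk g NGrey. nonisol g v)"
definition lab :: "nat \<Rightarrow> nat \<Rightarrow> hgraph \<Rightarrow> bool" where
  "lab cn j g \<longleftrightarrow> nlab g cn = [AInt (int j)]"

lemma Collect_upd: "{w \<in> A. (f(v := x)) w = \<mu>} =
  (if x = \<mu> then (if v \<in> A then insert v {w \<in> A. f w = \<mu>} else {w \<in> A. f w = \<mu>}) else {w \<in> A. f w = \<mu>} - {v})"
  by auto

lemma ok_R:
  assumes "core cn d g" "card (rt g) \<le> 1" "card (edges_mk g ERed) \<le> 1" "r \<noteq> Count"
  shows "finite (V g) \<and> finite (E g) \<and> bnd 7 (rule_step r g)"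
  using assms sane_of[OF assms(1-3)] bnd_rs[of g r] unfolding core_def by blast

lemma card_nodes_le: "finite (V g) \<Longrightarrow> card (nodes_mk g \<mu>) \<le> card (V g)"
  unfolding nodes_mk_def by (rule card_mono) auto
lemma card_edges_le: "finite (E g) \<Longrightarrow> card (edges_mk g \<mu>) \<le> card (E g)"
  unfolding edges_mk_def by (rule card_mono) auto

lemma ht_ex: "(\<And>x. ht (P x) c Q F) \<Longrightarrow> ht (\<lambda>g b. \<exists>x. P x g b) c Q F"
  unfolding ht_def by blast

section \<open>Relax\<close>

definition IR :: "nat \<Rightarrow> nat \<Rightarrow> nat \<Rightarrow> hgraph \<Rightarrow> nat \<Rightarrow> bool" where
  "IR cn d j g b \<longleftrightarrow> base0 cn d g \<and> rt g = {} \<and> gni g \<and> lab cn j g \<and>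
     28 * nb g + 28 * nun g + Rc g + j * PP g + Fin g \<le> b"

definition IR1 :: "nat \<Rightarrow> nat \<Rightarrow> nat \<Rightarrow> nat \<Rightarrow> hgraph \<Rightarrow> nat \<Rightarrow> bool" where
  "IR1 cn d j v g b \<longleftrightarrow> base0 cn d g \<and> rt g = {v} \<and> v \<in> V g \<and> v \<noteq> cn \<and> nmk g v = NBlue \<and> gni g \<and> lab cn j g \<and>
     28 * nb g + 28 * nun g + Rc g + j * PP g + Fin g \<le> b + 7"

definition IL :: "nat \<Rightarrow> nat \<Rightarrow> nat \<Rightarrow> nat \<Rightarrow> nat \<Rightarrow> hgraph \<Rightarrow> nat \<Rightarrow> bool" where
  "IL cn d j k v g b \<longleftrightarrow> base0 cn d g \<and> rt g = {v} \<and> v \<in> V g \<and> v \<noteq> cn \<and> nmk g v = NBlue \<and> nonisol g v \<and>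
     gni g \<and> lab cn j g \<and> 28 * nb g + 28 * nun g + Rc g + j * PP g + Fin g \<le> b + k"

definition IL2 :: "nat \<Rightarrow> nat \<Rightarrow> nat \<Rightarrow> nat \<Rightarrow> nat \<Rightarrow> nat \<Rightarrow> hgraph \<Rightarrow> nat \<Rightarrow> bool" where
  "IL2 cn d j k v e g b \<longleftrightarrow> core cn d g \<and> edges_mk g ERed = {e} \<and> e \<in> E g \<and> src g e = v \<and> tgt g e \<noteq> v \<and> e \<noteq> d \<and>
     rt g = {v} \<and> v \<in> V g \<and> v \<noteq> cn \<and> nmk g v = NBlue \<and> nonisol g v \<and>
     gni g \<and> lab cn j g \<and> 28 * nb g + 28 * nun g + Rc g + j * PP g + Fin g + k \<le> b + 14"

definition IC :: "nat \<Rightarrow> nat \<Rightarrow> nat \<Rightarrow> hgraph \<Rightarrow> nat \<Rightarrow> bool" where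
  "IC cn d j g b \<longleftrightarrow> base0 cn d g \<and> rt g = {} \<and> gni g \<and> lab cn j g \<and>
     28 * ngr g + 7 * nbe g + 7 + 28 * (nb g + ngr g) + j * PP g + Fin g \<le> b"

lemmas defs0 = base0_def gni_def lab_def nb_def ngr_def nun_def nbe_def PP_def Fin_def Rc_def
  nodes_mk_def edges_mk_def nonisol_def

lemma core_fin: "core cn d g \<Longrightarrow> finite (V g) \<and> finite (E g) \<and> card (E g) \<ge> 1 \<and> card (V g) \<ge> 1"
proof -
  assume "core cn d g"
  then have f: "finite (V g)" "finite (E g)" "d \<in> E g" "cn \<in> V g" unfolding core_def by auto
  then have "0 < card (E g)" "0 < card (V g)" using card_gt_0_iff by blast+
  then show ?thesis using f by simp
qed

lemma relax_root1: "ht (IR cn d j) (R Root1) (\<lambda>g b. \<exists>v. IR1 cn d j v g b) (IC cn d j)"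
proof (rule ht_R)
  fix g b assume a: "IR cn d j g b"
  then show "finite (V g) \<and> finite (E g) \<and> bnd 7 (rule_step Root1 g) \<and> 7 \<le> b"
    using ok_R[of cn d g Root1] by (auto simp: IR_def base0_def Rc_def)
next
  fix g b m c g' b' assume a: "IR cn d j g b" "(Some m, c) \<in> search Root1 g" "g' \<in> app Root1 g m" "b \<le> b' + 7"
  from ch_Root1_S[OF a(2)] obtain v where v: "v \<in> nodes_mk g NBlue" "m = [v]" by blast
  have c: "core cn d g" using a(1) by (simp add: IR_def base0_def)
  have vcn: "v \<noteq> cn" using v c unfolding core_def nodes_mk_def by auto
  have g': "g' = g\<lparr>rt := {v}\<rparr>" using a(1,3) v by (simp add: IR_def)
  have "core cn d g'" unfolding g' by (rule core_upd[OF c]) (use v vcn c in \<open>auto simp: nodes_mk_def core_def\<close>)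
  then show "\<exists>v. IR1 cn d j v g' b'" using a(1,4) v vcn unfolding IR1_def IR_def g'
    by (intro exI[of _ v]) (auto simp: defs0)
next
  fix g b c b' assume a: "IR cn d j g b" "(None, c) \<in> search Root1 g" "b \<le> b' + 7"
  have "nodes_mk g NBlue = {}" using ch_Root1_N[OF a(2)] .
  have c: "core cn d g" using a(1) by (simp add: IR_def base0_def)
  have "ngr g \<le> 2 * card (E g)"
  proof -
    have "nodes_mk g NGrey \<subseteq> {v. nonisol g v}" using a(1) by (auto simp: IR_def gni_def)
    then have "ngr g \<le> card {v. nonisol g v}" unfolding ngr_def
      by (intro card_mono) (use core_fin[OF c] in \<open>auto simp: nonisol_def\<close>)
    then show ?thesis using card_nonisol[of g] core_fin[OF c] by simp
  qed
  moreover have "nbe g \<le> card (E g)" unfolding nbe_def using card_edges_le core_fin[OF c] by blast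
  ultimately show "IC cn d j g b'" using a(1,3) \<open>nodes_mk g NBlue = {}\<close>
    unfolding IC_def IR_def by (simp add: nb_def Rc_def)
qed


lemma card_minus1: "finite A \<Longrightarrow> v \<in> A \<Longrightarrow> card (A - {v}) = card A - 1 \<and> card A \<ge> 1"
  using card_gt_0_iff[of A] by auto
lemma card_plus1: "finite A \<Longrightarrow> v \<notin> A \<Longrightarrow> card (insert v A) = card A + 1"
  by simp
lemma fin_nodes: "finite (V g) \<Longrightarrow> finite (nodes_mk g \<mu>)" unfolding nodes_mk_def by simp
lemma fin_edges: "finite (E g) \<Longrightarrow> finite (edges_mk g \<mu>)" unfolding edges_mk_def by simp

lemma roots_single: "rt g = {v} \<Longrightarrow> v \<in> V g \<Longrightarrow> roots g = {v}"
  unfolding roots_def by auto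

lemma Rc_ge: "core cn d g \<Longrightarrow> Rc g \<ge> 133"
  using core_fin[of cn d g] unfolding Rc_def by simp

lemma relax_nodeg: "ht (IR1 cn d j v) (R NoDeg) (IR cn d j) (IL cn d j 14 v)"
proof (rule ht_R)
  fix g b assume a: "IR1 cn d j v g b"
  then have c: "core cn d g" by (simp add: IR1_def base0_def)
  then show "finite (V g) \<and> finite (E g) \<and> bnd 7 (rule_step NoDeg g) \<and> 7 \<le> b"
    using a ok_R[of cn d g NoDeg] Rc_ge[OF c] by (auto simp: IR1_def base0_def)
next
  fix g b m c g' b' assume a: "IR1 cn d j v g b" "(Some m, c) \<in> search NoDeg g" "g' \<in> app NoDeg g m" "b \<le> b' + 7"
  have c: "core cn d g" using a(1) by (simp add: IR1_def base0_def)
  have rv: "roots g = {v}" using a(1) roots_single by (auto simp: IR1_def)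
  from ch_NoDeg_S[OF a(2)] rv have m: "m = [v]" by auto
  have g': "g' = g\<lparr>nmk := (nmk g)(v := NUnm), rt := {}\<rparr>" using a(1,3) m by (simp add: IR1_def)
  have "core cn d g'" unfolding g' by (rule core_upd[OF c]) (use a(1) c in \<open>auto simp: IR1_def core_def\<close>)
  moreover have "nb g' = nb g - 1 \<and> nb g \<ge> 1"
  proof -
    have "nodes_mk g' NBlue = nodes_mk g NBlue - {v}" "v \<in> nodes_mk g NBlue"
      using a(1) by (auto simp: g' nodes_mk_def IR1_def)
    then show ?thesis unfolding nb_def using card_minus1 fin_nodes core_fin[OF c] by metis
  qed
  ultimately show "IR cn d j g' b'" using a(1,4) unfolding IR_def IR1_def
    by (auto simp: defs0 g' Collect_upd)
next
  fix g b c b' assume a: "IR1 cn d j v g b" "(None, c) \<in> search NoDeg g" "b \<le> b' + 7"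
  have rv: "roots g = {v}" using a(1) roots_single by (auto simp: IR1_def)
  have "nonisol g v" using ch_NoDeg_N[OF a(2)] a(1) rv unfolding nonisol_def IR1_def by auto
  then show "IL cn d j 14 v g b'" using a(1,3) unfolding IL_def IR1_def by auto
qed

lemma relax_ue: "ht (IL cn d j 14 v) (R UnmarkedEdge) (\<lambda>g b. \<exists>e. IL2 cn d j 21 v e g b) (IL cn d j 21 v)"
proof (rule ht_R)
  fix g b assume a: "IL cn d j 14 v g b"
  then have c: "core cn d g" by (simp add: IL_def base0_def)
  then show "finite (V g) \<and> finite (E g) \<and> bnd 7 (rule_step UnmarkedEdge g) \<and> 7 \<le> b"
    using a ok_R[of cn d g UnmarkedEdge] Rc_ge[OF c] by (auto simp: IL_def base0_def)
next
  fix g b m c g' b' assume a: "IL cn d j 14 v g b" "(Some m, c) \<in> search UnmarkedEdge g" "g' \<in> app UnmarkedEdge g m" "b \<le> b' + 7"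
  have c: "core cn d g" using a(1) by (simp add: IL_def base0_def)
  have rv: "roots g = {v}" using a(1) roots_single by (auto simp: IL_def)
  from ch_UE_S[OF a(2)] rv obtain e where e: "e \<in> out_mk g v EUnm" "m = [v, tgt g e, e]" by auto
  have ed: "e \<noteq> d" using e c unfolding out_mk_def core_def by auto
  have g': "g' = g\<lparr>emk := (emk g)(e := ERed)\<rparr>" using a(3) e by simp
  have "core cn d g'" unfolding g' by (rule core_upd[OF c]) (use ed c in \<open>auto simp: core_def\<close>)
  moreover have "nun g' = nun g - 1" "nun g \<ge> 1"
  proof -
    have ee: "edges_mk g' EUnm = edges_mk g EUnm - {e}" "e \<in> edges_mk g EUnm"
      using e by (auto simp: g' edges_mk_def out_mk_def)
    have "finite (edges_mk g EUnm)" using core_fin[OF c] by (simp add: edges_mk_def)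
    then show "nun g' = nun g - 1" "nun g \<ge> 1" unfolding nun_def ee(1)
      using ee(2) card_gt_0_iff[of "edges_mk g EUnm"] by auto
  qed
  moreover have "edges_mk g' ERed = {e}" using a(1) e unfolding g' IL_def base0_def edges_mk_def out_mk_def by auto
  ultimately show "\<exists>e. IL2 cn d j 21 v e g' b'" using a(1,4) e ed unfolding IL2_def IL_def
    by (intro exI[of _ e]) (auto simp: defs0 g' out_mk_def)
next
  fix g b c b' assume a: "IL cn d j 14 v g b" "(None, c) \<in> search UnmarkedEdge g" "b \<le> b' + 7"
  then show "IL cn d j 21 v g b'" unfolding IL_def by auto
qed

lemma app_nlab: "g' \<in> app r g m \<Longrightarrow> r \<in> {Unvisited, Reduce} \<Longrightarrow> \<exists>l. g' = g\<lparr>nlab := (nlab g)(m ! 1 := l)\<rparr>"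
  by (auto simp: Let_def)

lemma relax_pair: "ht (IL2 cn d j 21 v e) (Call [Unvisited, Reduce]) (IL2 cn d j 7 v e) (IL2 cn d j 7 v e)"
proof (rule ht_R2)
  fix g b assume a: "IL2 cn d j 21 v e g b"
  then have c: "core cn d g" by (simp add: IL2_def)
  then show "finite (V g) \<and> finite (E g) \<and> bnd 7 (rule_step Unvisited g) \<and> bnd 7 (rule_step Reduce g) \<and> 14 \<le> b"
    using a ok_R[of cn d g Unvisited] ok_R[of cn d g Reduce] Rc_ge[OF c] by (auto simp: IL2_def)
next
  fix g b m c g' b' r assume a: "IL2 cn d j 21 v e g b" "r \<in> {Unvisited, Reduce}" "(Some m, c) \<in> search r g" "g' \<in> app r g m" "b \<le> b' + 14"
  have c: "core cn d g" using a(1) by (simp add: IL2_def)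
  have rv: "roots g = {v}" using a(1) roots_single by (auto simp: IL2_def)
  have "\<exists>v'\<in>roots g. \<exists>e'\<in>out_mk g v' ERed. m = [v', tgt g e', e']" using a(2,3) ch_Unv_S ch_Red_S by blast
  then have "\<exists>e'\<in>out_mk g v ERed. m = [v, tgt g e', e']" using rv by auto
  then obtain e' where e': "e' \<in> out_mk g v ERed" "m = [v, tgt g e', e']" by blast
  have "e' = e" using e' a(1) unfolding IL2_def out_mk_def edges_mk_def by auto
  then have m1: "m ! 1 = tgt g e" using e' by simp
  have tcn: "tgt g e \<noteq> cn" using a(1) c unfolding IL2_def core_def by auto
  obtain l where g': "g' = g\<lparr>nlab := (nlab g)(tgt g e := l)\<rparr>" using app_nlab[OF a(4,2)] m1 by auto
  show "IL2 cn d j 7 v e g' b'" using a(1,5) tcn unfolding IL2_def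
    by (auto simp: g' core_def defs0)
next
  fix g b b' assume "IL2 cn d j 21 v e g b" "b \<le> b' + 14"
  then show "IL2 cn d j 7 v e g b'" unfolding IL2_def by auto
qed

lemma relax_finish: "ht (IL2 cn d j 7 v e) (R Finish) (IL cn d j 14 v) (\<lambda>_ _. False)"
proof (rule ht_R)
  fix g b assume a: "IL2 cn d j 7 v e g b"
  then have c: "core cn d g" by (simp add: IL2_def)
  then show "finite (V g) \<and> finite (E g) \<and> bnd 7 (rule_step Finish g) \<and> 7 \<le> b"
    using a ok_R[of cn d g Finish] Rc_ge[OF c] by (auto simp: IL2_def)
next
  fix g b m c g' b' assume a: "IL2 cn d j 7 v e g b" "(Some m, c) \<in> search Finish g" "g' \<in> app Finish g m" "b \<le> b' + 7"
  have c: "core cn d g" using a(1) by (simp add: IL2_def)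
  have rv: "roots g = {v}" using a(1) roots_single by (auto simp: IL2_def)
  from ch_Fin_S[OF a(2)] rv obtain e' where e': "e' \<in> out_mk g v ERed" "m = [v, tgt g e', e']" by auto
  have "e' = e" using e' a(1) unfolding IL2_def out_mk_def edges_mk_def by auto
  then have g': "g' = g\<lparr>emk := (emk g)(e := EBlue)\<rparr>" using a(3) e' by simp
  have ed: "e \<noteq> d" using a(1) by (simp add: IL2_def)
  have "core cn d g'" unfolding g' by (rule core_upd[OF c]) (use ed c in \<open>auto simp: core_def\<close>)
  moreover have "nun g' = nun g"
  proof -
    have "emk g e = ERed" using a(1) unfolding IL2_def edges_mk_def by (metis (mono_tags, lifting) insertI1 mem_Collect_eq)
    then have "edges_mk g' EUnm = edges_mk g EUnm" by (auto simp: g' edges_mk_def)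
    then show ?thesis by (simp add: nun_def)
  qed
  moreover have "edges_mk g' ERed = {}" using a(1) unfolding g' IL2_def edges_mk_def by auto
  ultimately show "IL cn d j 14 v g' b'" using a(1,4) unfolding IL2_def IL_def
    by (auto simp: defs0 g')
next
  fix g b c b' assume a: "IL2 cn d j 7 v e g b" "(None, c) \<in> search Finish g" "b \<le> b' + 7"
  have rv: "roots g = {v}" using a(1) roots_single by (auto simp: IL2_def)
  have "out_mk g v ERed = {}" using ch_Fin_N[OF a(2)] a(1) rv by (auto simp: IL2_def)
  moreover have "e \<in> out_mk g v ERed" using a(1) unfolding IL2_def out_mk_def edges_mk_def by auto
  ultimately show False by simp
qed

lemma relax_unroot1: "ht (IL cn d j 21 v) (R Unroot1) (IR cn d j) (\<lambda>_ _. False)"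
proof (rule ht_R)
  fix g b assume a: "IL cn d j 21 v g b"
  then have c: "core cn d g" by (simp add: IL_def base0_def)
  then show "finite (V g) \<and> finite (E g) \<and> bnd 7 (rule_step Unroot1 g) \<and> 7 \<le> b"
    using a ok_R[of cn d g Unroot1] Rc_ge[OF c] by (auto simp: IL_def base0_def)
next
  fix g b m c g' b' assume a: "IL cn d j 21 v g b" "(Some m, c) \<in> search Unroot1 g" "g' \<in> app Unroot1 g m" "b \<le> b' + 7"
  have c: "core cn d g" using a(1) by (simp add: IL_def base0_def)
  have rv: "roots g = {v}" using a(1) roots_single by (auto simp: IL_def)
  from ch_Unroot1_S[OF a(2)] rv have m: "m = [v]" by auto
  have g': "g' = g\<lparr>nmk := (nmk g)(v := NGrey), rt := {}\<rparr>" using a(1,3) m by (simp add: IL_def)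
  have "core cn d g'" unfolding g' by (rule core_upd[OF c]) (use a(1) c in \<open>auto simp: IL_def core_def\<close>)
  moreover have "nb g' = nb g - 1 \<and> nb g \<ge> 1"
  proof -
    have "nodes_mk g' NBlue = nodes_mk g NBlue - {v}" "v \<in> nodes_mk g NBlue"
      using a(1) by (auto simp: g' nodes_mk_def IL_def)
    then show ?thesis unfolding nb_def using card_minus1 fin_nodes core_fin[OF c] by metis
  qed
  moreover have "nodes_mk g' NGrey = insert v (nodes_mk g NGrey)" using a(1) by (auto simp: g' nodes_mk_def IL_def)
  ultimately show "IR cn d j g' b'" using a(1,4) unfolding IR_def IL_def
    by (auto simp: defs0 g' Collect_upd)
next
  fix g b c b' assume a: "IL cn d j 21 v g b" "(None, c) \<in> search Unroot1 g" "b \<le> b' + 7"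
  have rv: "roots g = {v}" using a(1) roots_single by (auto simp: IL_def)
  show False using ch_Unroot1_N[OF a(2)] a(1) rv by (auto simp: IL_def)
qed


lemma ch_SetFlag_N: "(None, c) \<in> search SetFlag g \<Longrightarrow> nodes_mk g NGreen = {}"
  by (rule equals0I) (auto dest: scan_None)

lemma relax_all: "ht (IR cn d j) (Loop Relax) (IC cn d j) (\<lambda>_ _. False)"
proof -
  have inner: "ht (IL cn d j 14 v) (Seq (R UnmarkedEdge) (Seq (Try (Call [Unvisited, Reduce]) Skip Skip) (R Finish)))
     (IL cn d j 14 v) (IL cn d j 21 v)" for v
    by (rule ht_seq[OF relax_ue ht_ex[OF ht_seq[OF ht_try[OF relax_pair ht_skip ht_skip] relax_finish]]])
  have els: "ht (IL cn d j 14 v) (Seq (Loop (Seq (R UnmarkedEdge) (Seq (Try (Call [Unvisited, Reduce]) Skip Skip) (R Finish)))) (R Unroot1))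
     (IR cn d j) (\<lambda>_ _. False)" for v
    by (rule ht_seq[OF ht_loop[OF _ inner] relax_unroot1]) simp
  have body: "ht (IR cn d j) Relax (IR cn d j) (IC cn d j)"
    unfolding Relax_def
    by (rule ht_seq[OF relax_root1 ht_ex[OF ht_try[OF relax_nodeg ht_skip els]]])
  show ?thesis by (rule ht_loop[OF _ body]) (simp add: Relax_def)
qed

section \<open>Clean\<close>

definition IC1 :: "nat \<Rightarrow> nat \<Rightarrow> nat \<Rightarrow> nat \<Rightarrow> nat \<Rightarrow> hgraph \<Rightarrow> nat \<Rightarrow> bool" where
  "IC1 cn d j k v g b \<longleftrightarrow> base0 cn d g \<and> rt g = {v} \<and> v \<in> V g \<and> v \<noteq> cn \<and> nmk g v = NBlue \<and> gni g \<and> lab cn j g \<and>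
     28 * ngr g + 7 * nbe g + k + 28 * (nb g + ngr g) + j * PP g + Fin g \<le> b"

definition IM :: "nat \<Rightarrow> nat \<Rightarrow> nat \<Rightarrow> hgraph \<Rightarrow> nat \<Rightarrow> bool" where
  "IM cn d i g b \<longleftrightarrow> base0 cn d g \<and> rt g = {} \<and> gni g \<and> lab cn i g \<and> i * PP g + 28 * nb g + Fin g \<le> b"

lemma Fin_ge: "Fin g \<ge> 35" unfolding Fin_def by simp

lemma clean_root2: "ht (IC cn d j) (R Root2) (\<lambda>g b. \<exists>v. IC1 cn d j 28 v g b) (IM cn d j)"
proof (rule ht_R)
  fix g b assume a: "IC cn d j g b"
  then have c: "core cn d g" by (simp add: IC_def base0_def)
  then show "finite (V g) \<and> finite (E g) \<and> bnd 7 (rule_step Root2 g) \<and> 7 \<le> b"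
    using a ok_R[of cn d g Root2] Fin_ge[of g] by (auto simp: IC_def base0_def)
next
  fix g b m c g' b' assume a: "IC cn d j g b" "(Some m, c) \<in> search Root2 g" "g' \<in> app Root2 g m" "b \<le> b' + 7"
  from ch_Root2_S[OF a(2)] obtain v where v: "v \<in> nodes_mk g NGrey" "m = [v]" by blast
  have c: "core cn d g" using a(1) by (simp add: IC_def base0_def)
  have vcn: "v \<noteq> cn" "v \<in> V g" using v c unfolding core_def nodes_mk_def by auto
  have g': "g' = g\<lparr>nmk := (nmk g)(v := NBlue), rt := {v}\<rparr>" using a(1,3) v by (simp add: IC_def)
  have "core cn d g'" unfolding g' by (rule core_upd[OF c]) (use v vcn c in \<open>auto simp: nodes_mk_def core_def\<close>)
  moreover have "ngr g' = ngr g - 1 \<and> ngr g \<ge> 1"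
  proof -
    have "nodes_mk g' NGrey = nodes_mk g NGrey - {v}" using v by (auto simp: g' nodes_mk_def)
    then show ?thesis unfolding ngr_def using v card_minus1 fin_nodes core_fin[OF c] by metis
  qed
  moreover have "nb g' = nb g + 1"
  proof -
    have "nodes_mk g' NBlue = insert v (nodes_mk g NBlue)" "v \<notin> nodes_mk g NBlue"
      using v by (auto simp: g' nodes_mk_def)
    then show ?thesis unfolding nb_def using card_plus1 fin_nodes core_fin[OF c] by metis
  qed
  moreover have "nodes_mk g' NGrey \<subseteq> nodes_mk g NGrey" by (auto simp: g' nodes_mk_def)
  ultimately show "\<exists>v. IC1 cn d j 28 v g' b'" using a(1,4) v vcn unfolding IC1_def IC_def
    by (intro exI[of _ v]) (auto simp: defs0 g')
next
  fix g b c b' assume a: "IC cn d j g b" "(None, c) \<in> search Root2 g" "b \<le> b' + 7"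
  have "nodes_mk g NGrey = {}" using ch_Root2_N[OF a(2)] .
  then show "IM cn d j g b'" using a(1,3) unfolding IM_def IC_def by (simp add: ngr_def gni_def)
qed

lemma clean_um: "ht (IC1 cn d j 28 v) (R UnmarkEdge) (IC1 cn d j 28 v) (IC1 cn d j 21 v)"
proof (rule ht_R)
  fix g b assume a: "IC1 cn d j 28 v g b"
  then have c: "core cn d g" by (simp add: IC1_def base0_def)
  then show "finite (V g) \<and> finite (E g) \<and> bnd 7 (rule_step UnmarkEdge g) \<and> 7 \<le> b"
    using a ok_R[of cn d g UnmarkEdge] Fin_ge[of g] by (auto simp: IC1_def base0_def)
next
  fix g b m c g' b' assume a: "IC1 cn d j 28 v g b" "(Some m, c) \<in> search UnmarkEdge g" "g' \<in> app UnmarkEdge g m" "b \<le> b' + 7"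
  have c: "core cn d g" using a(1) by (simp add: IC1_def base0_def)
  have rv: "roots g = {v}" using a(1) roots_single by (auto simp: IC1_def)
  from ch_UM_S[OF a(2)] rv obtain e where e: "e \<in> out_mk g v EBlue" "m = [v, tgt g e, e]" by auto
  have ed: "e \<noteq> d" using e c unfolding out_mk_def core_def by auto
  have g': "g' = g\<lparr>emk := (emk g)(e := EUnm)\<rparr>" using a(3) e by simp
  have "core cn d g'" unfolding g' by (rule core_upd[OF c]) (use ed c in \<open>auto simp: core_def\<close>)
  moreover have "nbe g' = nbe g - 1 \<and> nbe g \<ge> 1"
  proof -
    have "edges_mk g' EBlue = edges_mk g EBlue - {e}" "e \<in> edges_mk g EBlue"
      using e by (auto simp: g' edges_mk_def out_mk_def)
    then show ?thesis unfolding nbe_def using card_minus1 fin_edges core_fin[OF c] by metis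
  qed
  moreover have "edges_mk g' ERed = {}" using a(1) e unfolding g' IC1_def base0_def edges_mk_def out_mk_def by auto
  ultimately show "IC1 cn d j 28 v g' b'" using a(1,4) unfolding IC1_def
    by (auto simp: defs0 g')
next
  fix g b c b' assume a: "IC1 cn d j 28 v g b" "(None, c) \<in> search UnmarkEdge g" "b \<le> b' + 7"
  then show "IC1 cn d j 21 v g b'" unfolding IC1_def by auto
qed

lemma clean_unroot2: "ht (IC1 cn d j 21 v) (R Unroot2) (IC cn d j) (\<lambda>_ _. False)"
proof (rule ht_R)
  fix g b assume a: "IC1 cn d j 21 v g b"
  then have c: "core cn d g" by (simp add: IC1_def base0_def)
  then show "finite (V g) \<and> finite (E g) \<and> bnd 7 (rule_step Unroot2 g) \<and> 7 \<le> b"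
    using a ok_R[of cn d g Unroot2] Fin_ge[of g] by (auto simp: IC1_def base0_def)
next
  fix g b m c g' b' assume a: "IC1 cn d j 21 v g b" "(Some m, c) \<in> search Unroot2 g" "g' \<in> app Unroot2 g m" "b \<le> b' + 7"
  have c: "core cn d g" using a(1) by (simp add: IC1_def base0_def)
  have rv: "roots g = {v}" using a(1) roots_single by (auto simp: IC1_def)
  from ch_Unroot2_S[OF a(2)] rv have m: "m = [v]" by auto
  have g': "g' = g\<lparr>rt := {}\<rparr>" using a(1,3) m by (simp add: IC1_def)
  have "core cn d g'" unfolding g' by (rule core_upd[OF c]) (use c in \<open>auto simp: core_def\<close>)
  then show "IC cn d j g' b'" using a(1,4) unfolding IC_def IC1_def
    by (auto simp: defs0 g')
next
  fix g b c b' assume a: "IC1 cn d j 21 v g b" "(None, c) \<in> search Unroot2 g" "b \<le> b' + 7"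
  have rv: "roots g = {v}" using a(1) roots_single by (auto simp: IC1_def)
  show False using ch_Unroot2_N[OF a(2)] a(1) rv by (auto simp: IC1_def)
qed

lemma clean_all: "ht (IC cn d j) (Loop Clean) (IM cn d j) (\<lambda>_ _. False)"
proof -
  have body: "ht (IC cn d j) Clean (IC cn d j) (IM cn d j)"
    unfolding Clean_def
    by (rule ht_seq[OF clean_root2 ht_ex[OF ht_seq[OF ht_loop[OF _ clean_um] clean_unroot2]]]) simp
  show ?thesis by (rule ht_loop[OF _ body]) (simp add: Clean_def)
qed


section \<open>Main loop\<close>

definition FH :: "nat \<Rightarrow> nat \<Rightarrow> hgraph \<Rightarrow> nat \<Rightarrow> bool" where
  "FH cn d g b \<longleftrightarrow> base0 cn d g \<and> rt g = {} \<and> 28 * nb g + 28 * nun g + 28 + 7 * card (V g) \<le> b"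

lemma nb_le: "core cn d g \<Longrightarrow> nb g \<le> card (V g)"
  unfolding nb_def using card_nodes_le core_fin by blast
lemma nun_le: "core cn d g \<Longrightarrow> nun g \<le> card (E g)"
  unfolding nun_def using card_edges_le core_fin by blast

lemma dec: "ht (IM cn d i) (R Decrement) (\<lambda>g b. \<exists>j. IR cn d j g b) (FH cn d)"
proof (rule ht_R)
  fix g b assume a: "IM cn d i g b"
  then have c: "core cn d g" by (simp add: IM_def base0_def)
  then show "finite (V g) \<and> finite (E g) \<and> bnd 7 (rule_step Decrement g) \<and> 7 \<le> b"
    using a ok_R[of cn d g Decrement] Fin_ge[of g] by (auto simp: IM_def base0_def)
next
  fix g b m c g' b' assume a: "IM cn d i g b" "(Some m, c) \<in> search Decrement g" "g' \<in> app Decrement g m" "b \<le> b' + 7"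
  have c: "core cn d g" using a(1) by (simp add: IM_def base0_def)
  from ch_Dec_S[OF a(2)] core_green[OF c] have m: "m = [cn]" and ip: "\<exists>i'. nlab g cn = [AInt i'] \<and> i' > 0" by auto
  have lab: "nlab g cn = [AInt (int i)]" using a(1) by (simp add: IM_def lab_def)
  then have i0: "i > 0" using ip by auto
  have g': "g' = g\<lparr>nlab := (nlab g)(cn := [AInt (int (i - 1))])\<rparr>" using a(3) m lab i0 by (simp add: of_nat_diff)
  have ipp: "i * PP g = (i - 1) * PP g + PP g" using i0 by (cases i) auto
  have "nun g \<le> card (E g)" using nun_le[OF c] .
  then show "\<exists>j. IR cn d j g' b'" using a(1,4) ipp unfolding IR_def IM_def
    by (intro exI[of _ "i - 1"]) (auto simp: g' defs0 core_def)
next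
  fix g b c b' assume a: "IM cn d i g b" "(None, c) \<in> search Decrement g" "b \<le> b' + 7"
  have c: "core cn d g" using a(1) by (simp add: IM_def base0_def)
  have lab: "nlab g cn = [AInt (int i)]" using a(1) by (simp add: IM_def lab_def)
  have "i = 0" using ch_Dec_N[OF a(2)] core_green[OF c] lab by auto
  then show "FH cn d g b'" using a(1,3) nun_le[OF c] nb_le[OF c] unfolding FH_def IM_def
    by (simp add: Fin_def)
qed

lemma main_all: "ht (\<lambda>g b. \<exists>i. IM cn d i g b) (Loop (Seq (R Decrement) (Seq (Loop Relax) (Loop Clean)))) (FH cn d) (\<lambda>_ _. False)"
proof -
  have rc: "ht (\<lambda>g b. \<exists>j. IR cn d j g b) (Seq (Loop Relax) (Loop Clean)) (\<lambda>g b. \<exists>i. IM cn d i g b) (\<lambda>_ _. False)"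
    by (rule ht_ex, rule ht_conseq[OF ht_seq[OF relax_all clean_all]]) auto
  have body: "ht (\<lambda>g b. \<exists>i. IM cn d i g b) (Seq (R Decrement) (Seq (Loop Relax) (Loop Clean))) (\<lambda>g b. \<exists>i. IM cn d i g b) (FH cn d)"
    by (rule ht_ex, rule ht_seq[OF dec rc])
  show ?thesis by (rule ht_loop[OF _ body]) simp
qed

section \<open>Count\<close>

definition ICnt :: "nat \<Rightarrow> nat \<Rightarrow> hgraph \<Rightarrow> nat \<Rightarrow> bool" where
  "ICnt cn d g b \<longleftrightarrow> base0 cn d g \<and> rt g = {} \<and>
     (\<exists>i. lab cn i g \<and> 7 * ngr g + 7 + (i + ngr g) * PP g + 28 * card (V g) + Fin g \<le> b)"

lemma count: "ht (ICnt cn d) (R Count) (ICnt cn d) (\<lambda>g b. \<exists>i. IM cn d i g b)"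
proof (rule ht_R)
  fix g b assume a: "ICnt cn d g b"
  then have c: "core cn d g" by (simp add: ICnt_def base0_def)
  have s: "sane g" using sane_of[OF c] a by (simp add: ICnt_def base0_def)
  have "is_int_label (nlab g cn)" using a by (auto simp: ICnt_def lab_def is_int_label_def)
  then have "bnd 7 (rule_step Count g)" using bnd_rule_step[OF bs_Count[OF s core_green[OF c]]] by blast
  then show "finite (V g) \<and> finite (E g) \<and> bnd 7 (rule_step Count g) \<and> 7 \<le> b"
    using a core_fin[OF c] Fin_ge[of g] by (auto simp: ICnt_def)
next
  fix g b m c g' b' assume a: "ICnt cn d g b" "(Some m, c) \<in> search Count g" "g' \<in> app Count g m" "b \<le> b' + 7"
  have c: "core cn d g" using a(1) by (simp add: ICnt_def base0_def)
  from ch_Count_S[OF a(2)] core_green[OF c] obtain v where v: "v \<in> nodes_mk g NGrey" "m = [v, cn]" by auto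
  obtain i where i: "lab cn i g" "7 * ngr g + 7 + (i + ngr g) * PP g + 28 * card (V g) + Fin g \<le> b"
    using a(1) by (auto simp: ICnt_def)
  have vcn: "v \<noteq> cn" "v \<in> V g" using v c unfolding core_def nodes_mk_def by auto
  have g': "g' = g\<lparr>nlab := (nlab g)(v := nlab g v @ [AStr ''f''], cn := [AInt (int i + 1)]), nmk := (nmk g)(v := NBlue)\<rparr>"
    using a(3) v i(1) by (auto simp: lab_def)
  have "core cn d g'" unfolding g' by (rule core_upd[OF c]) (use v vcn c in \<open>auto simp: nodes_mk_def core_def\<close>)
  moreover have "ngr g' = ngr g - 1 \<and> ngr g \<ge> 1"
  proof -
    have "nodes_mk g' NGrey = nodes_mk g NGrey - {v}" using v by (auto simp: g' nodes_mk_def)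
    then show ?thesis unfolding ngr_def using v card_minus1 fin_nodes core_fin[OF c] by metis
  qed
  moreover have "edges_mk g' ERed = {}" using a(1) unfolding g' ICnt_def base0_def edges_mk_def by auto
  moreover have "(i + 1 + (ngr g - 1)) = i + ngr g" using calculation(2) by simp
  moreover have "rt g = {}" using a(1) by (simp add: ICnt_def)
  ultimately show "ICnt cn d g' b'" using a(4) i vcn unfolding ICnt_def
    by (intro conjI exI[of _ "i + 1"]) (auto simp: base0_def lab_def PP_def Fin_def g')
next
  fix g b c b' assume a: "ICnt cn d g b" "(None, c) \<in> search Count g" "b \<le> b' + 7"
  have c: "core cn d g" using a(1) by (simp add: ICnt_def base0_def)
  obtain i where i: "lab cn i g" "7 * ngr g + 7 + (i + ngr g) * PP g + 28 * card (V g) + Fin g \<le> b"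
    using a(1) by (auto simp: ICnt_def)
  have "is_int_label (nlab g cn)" using i(1) by (auto simp: lab_def is_int_label_def)
  then have "nodes_mk g NGrey = {}" using ch_Count_N[OF a(2)] core_green[OF c] by blast
  then show "\<exists>i. IM cn d i g b'" using a(1,3) i nb_le[OF c] unfolding IM_def ICnt_def
    by (intro exI[of _ i]) (simp add: ngr_def gni_def)
qed

lemma count_all: "ht (ICnt cn d) (Loop (R Count)) (\<lambda>g b. \<exists>i. IM cn d i g b) (\<lambda>_ _. False)"
  by (rule ht_loop[OF _ count]) simp


definition F1 :: "nat \<Rightarrow> nat \<Rightarrow> nat \<Rightarrow> nat \<Rightarrow> hgraph \<Rightarrow> nat \<Rightarrow> bool" where
  "F1 cn d k v g b \<longleftrightarrow> base0 cn d g \<and> rt g = {v} \<and> v \<in> V g \<and> v \<noteq> cn \<and> nmk g v = NBlue \<and>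
     28 * nb g + 28 * nun g + 28 + 7 * card (V g) \<le> b + k"

definition FL2 :: "nat \<Rightarrow> nat \<Rightarrow> nat \<Rightarrow> nat \<Rightarrow> nat \<Rightarrow> hgraph \<Rightarrow> nat \<Rightarrow> bool" where
  "FL2 cn d k v e g b \<longleftrightarrow> core cn d g \<and> edges_mk g ERed = {e} \<and> e \<in> E g \<and> src g e = v \<and> tgt g e \<noteq> v \<and> e \<noteq> d \<and>
     rt g = {v} \<and> v \<in> V g \<and> v \<noteq> cn \<and> nmk g v = NBlue \<and>
     28 * nb g + 28 * nun g + 28 + 7 * card (V g) + k \<le> b + 7"

definition FT :: "nat \<Rightarrow> nat \<Rightarrow> nat \<Rightarrow> hgraph \<Rightarrow> nat \<Rightarrow> bool" where
  "FT cn d k g b \<longleftrightarrow> base0 cn d g \<and> rt g = {} \<and> k + 7 * card (V g) \<le> b"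

definition ND :: "hgraph \<Rightarrow> nat \<Rightarrow> bool" where
  "ND g b \<longleftrightarrow> finite (V g) \<and> finite (E g) \<and> 7 * card (nodes_mk g NUnm) + 7 \<le> b"

lemma fin_root1: "ht (FH cn d) (R Root1) (\<lambda>g b. \<exists>v. F1 cn d 7 v g b) (FT cn d 21)"
proof (rule ht_R)
  fix g b assume a: "FH cn d g b"
  then have c: "core cn d g" by (simp add: FH_def base0_def)
  then show "finite (V g) \<and> finite (E g) \<and> bnd 7 (rule_step Root1 g) \<and> 7 \<le> b"
    using a ok_R[of cn d g Root1] by (auto simp: FH_def base0_def)
next
  fix g b m c g' b' assume a: "FH cn d g b" "(Some m, c) \<in> search Root1 g" "g' \<in> app Root1 g m" "b \<le> b' + 7"
  from ch_Root1_S[OF a(2)] obtain v where v: "v \<in> nodes_mk g NBlue" "m = [v]" by blast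
  have c: "core cn d g" using a(1) by (simp add: FH_def base0_def)
  have vcn: "v \<noteq> cn" using v c unfolding core_def nodes_mk_def by auto
  have g': "g' = g\<lparr>rt := {v}\<rparr>" using a(1,3) v by (simp add: FH_def)
  have "core cn d g'" unfolding g' by (rule core_upd[OF c]) (use v vcn c in \<open>auto simp: nodes_mk_def core_def\<close>)
  then show "\<exists>v. F1 cn d 7 v g' b'" using a(1,4) v vcn unfolding F1_def FH_def g'
    by (intro exI[of _ v]) (auto simp: defs0)
next
  fix g b c b' assume a: "FH cn d g b" "(None, c) \<in> search Root1 g" "b \<le> b' + 7"
  then show "FT cn d 21 g b'" unfolding FT_def FH_def by auto
qed

lemma fin_ue: "ht (F1 cn d 7 v) (R UnmarkedEdge) (\<lambda>g b. \<exists>e. FL2 cn d 21 v e g b) (F1 cn d 14 v)"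
proof (rule ht_R)
  fix g b assume a: "F1 cn d 7 v g b"
  then have c: "core cn d g" by (simp add: F1_def base0_def)
  then show "finite (V g) \<and> finite (E g) \<and> bnd 7 (rule_step UnmarkedEdge g) \<and> 7 \<le> b"
    using a ok_R[of cn d g UnmarkedEdge] core_fin[OF c] by (auto simp: F1_def base0_def)
next
  fix g b m c g' b' assume a: "F1 cn d 7 v g b" "(Some m, c) \<in> search UnmarkedEdge g" "g' \<in> app UnmarkedEdge g m" "b \<le> b' + 7"
  have c: "core cn d g" using a(1) by (simp add: F1_def base0_def)
  have rv: "roots g = {v}" using a(1) roots_single by (auto simp: F1_def)
  from ch_UE_S[OF a(2)] rv obtain e where e: "e \<in> out_mk g v EUnm" "m = [v, tgt g e, e]" by auto
  have ed: "e \<noteq> d" using e c unfolding out_mk_def core_def by auto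
  have g': "g' = g\<lparr>emk := (emk g)(e := ERed)\<rparr>" using a(3) e by simp
  have "core cn d g'" unfolding g' by (rule core_upd[OF c]) (use ed c in \<open>auto simp: core_def\<close>)
  moreover have "nun g' = nun g - 1 \<and> nun g \<ge> 1"
  proof -
    have "edges_mk g' EUnm = edges_mk g EUnm - {e}" "e \<in> edges_mk g EUnm"
      using e by (auto simp: g' edges_mk_def out_mk_def)
    then show ?thesis unfolding nun_def using card_minus1 fin_edges core_fin[OF c] by metis
  qed
  moreover have "edges_mk g' ERed = {e}" using a(1) e unfolding g' F1_def base0_def edges_mk_def out_mk_def by auto
  ultimately show "\<exists>e. FL2 cn d 21 v e g' b'" using a(1,4) e ed unfolding FL2_def F1_def
    by (intro exI[of _ e]) (auto simp: defs0 g' out_mk_def)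
next
  fix g b c b' assume a: "F1 cn d 7 v g b" "(None, c) \<in> search UnmarkedEdge g" "b \<le> b' + 7"
  then show "F1 cn d 14 v g b'" unfolding F1_def by auto
qed

lemma fin_reduce: "ht (\<lambda>g b. FL2 cn d 21 v e g b \<and> g = g0) (R Reduce) (\<lambda>_ b. FL2 cn d 14 v e g0 b) (FL2 cn d 14 v e)"
proof (rule ht_R)
  fix g b assume a: "FL2 cn d 21 v e g b \<and> g = g0"
  then have c: "core cn d g" unfolding FL2_def by blast
  then show "finite (V g) \<and> finite (E g) \<and> bnd 7 (rule_step Reduce g) \<and> 7 \<le> b"
    using a ok_R[of cn d g Reduce] core_fin[OF c] by (auto simp: FL2_def)
next
  fix g b m c g' b' assume "FL2 cn d 21 v e g b \<and> g = g0" "b \<le> b' + 7"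
  then show "FL2 cn d 14 v e g0 b'" unfolding FL2_def by auto
next
  fix g b c b' assume "FL2 cn d 21 v e g b \<and> g = g0" "b \<le> b' + 7"
  then show "FL2 cn d 14 v e g b'" unfolding FL2_def by auto
qed

lemma fin_setflag: "ht (FL2 cn d 14 v e) (R SetFlag) (FL2 cn d 7 v e) (\<lambda>_ _. False)"
proof (rule ht_R)
  fix g b assume a: "FL2 cn d 14 v e g b"
  then have c: "core cn d g" by (simp add: FL2_def)
  then show "finite (V g) \<and> finite (E g) \<and> bnd 7 (rule_step SetFlag g) \<and> 7 \<le> b"
    using a ok_R[of cn d g SetFlag] core_fin[OF c] by (auto simp: FL2_def)
next
  fix g b m c g' b' assume a: "FL2 cn d 14 v e g b" "(Some m, c) \<in> search SetFlag g" "g' \<in> app SetFlag g m" "b \<le> b' + 7"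
  have c: "core cn d g" using a(1) by (simp add: FL2_def)
  from ch_SetFlag_S[OF a(2)] core_green[OF c] have m: "m = [cn]" by auto
  have g': "g' = g\<lparr>nlab := (nlab g)(cn := [AInt (-1)])\<rparr>" using a(3) m by simp
  show "FL2 cn d 7 v e g' b'" using a(1,4) unfolding FL2_def
    by (auto simp: g' core_def defs0)
next
  fix g b c b' assume a: "FL2 cn d 14 v e g b" "(None, c) \<in> search SetFlag g" "b \<le> b' + 7"
  have c: "core cn d g" using a(1) by (simp add: FL2_def)
  show False using ch_SetFlag_N[OF a(2)] core_green[OF c] by simp
qed

lemma fin_if: "ht (FL2 cn d 21 v e) (IfC (R Reduce) (R SetFlag) Skip) (FL2 cn d 7 v e) (\<lambda>_ _. False)"
proof -
  have sk: "ht (FL2 cn d 14 v e) Skip (FL2 cn d 7 v e) (\<lambda>_ _. False)"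
    by (rule ht_conseq[OF ht_skip]) (auto simp: FL2_def)
  show ?thesis
    by (rule ht_conseq[OF ht_if[OF fin_reduce fin_setflag sk]]) auto
qed

lemma fin_finish: "ht (FL2 cn d 7 v e) (R Finish) (F1 cn d 7 v) (\<lambda>_ _. False)"
proof (rule ht_R)
  fix g b assume a: "FL2 cn d 7 v e g b"
  then have c: "core cn d g" by (simp add: FL2_def)
  then show "finite (V g) \<and> finite (E g) \<and> bnd 7 (rule_step Finish g) \<and> 7 \<le> b"
    using a ok_R[of cn d g Finish] core_fin[OF c] by (auto simp: FL2_def)
next
  fix g b m c g' b' assume a: "FL2 cn d 7 v e g b" "(Some m, c) \<in> search Finish g" "g' \<in> app Finish g m" "b \<le> b' + 7"
  have c: "core cn d g" using a(1) by (simp add: FL2_def)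
  have rv: "roots g = {v}" using a(1) roots_single by (auto simp: FL2_def)
  from ch_Fin_S[OF a(2)] rv obtain e' where e': "e' \<in> out_mk g v ERed" "m = [v, tgt g e', e']" by auto
  have "e' = e" using e' a(1) unfolding FL2_def out_mk_def edges_mk_def by auto
  then have g': "g' = g\<lparr>emk := (emk g)(e := EBlue)\<rparr>" using a(3) e' by simp
  have ed: "e \<noteq> d" using a(1) by (simp add: FL2_def)
  have "core cn d g'" unfolding g' by (rule core_upd[OF c]) (use ed c in \<open>auto simp: core_def\<close>)
  moreover have "nun g' = nun g"
  proof -
    have "emk g e = ERed" using a(1) unfolding FL2_def edges_mk_def by (metis (mono_tags, lifting) insertI1 mem_Collect_eq)
    then have "edges_mk g' EUnm = edges_mk g EUnm" by (auto simp: g' edges_mk_def)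
    then show ?thesis by (simp add: nun_def)
  qed
  moreover have "edges_mk g' ERed = {}" using a(1) unfolding g' FL2_def edges_mk_def by auto
  ultimately show "F1 cn d 7 v g' b'" using a(1,4) unfolding FL2_def F1_def
    by (auto simp: defs0 g')
next
  fix g b c b' assume a: "FL2 cn d 7 v e g b" "(None, c) \<in> search Finish g" "b \<le> b' + 7"
  have rv: "roots g = {v}" using a(1) roots_single by (auto simp: FL2_def)
  have "out_mk g v ERed = {}" using ch_Fin_N[OF a(2)] a(1) rv by (auto simp: FL2_def)
  moreover have "e \<in> out_mk g v ERed" using a(1) unfolding FL2_def out_mk_def edges_mk_def by auto
  ultimately show False by simp
qed

lemma fin_unroot1: "ht (F1 cn d 14 v) (R Unroot1) (FH cn d) (\<lambda>_ _. False)"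
proof (rule ht_R)
  fix g b assume a: "F1 cn d 14 v g b"
  then have c: "core cn d g" by (simp add: F1_def base0_def)
  then show "finite (V g) \<and> finite (E g) \<and> bnd 7 (rule_step Unroot1 g) \<and> 7 \<le> b"
    using a ok_R[of cn d g Unroot1] core_fin[OF c] by (auto simp: F1_def base0_def)
next
  fix g b m c g' b' assume a: "F1 cn d 14 v g b" "(Some m, c) \<in> search Unroot1 g" "g' \<in> app Unroot1 g m" "b \<le> b' + 7"
  have c: "core cn d g" using a(1) by (simp add: F1_def base0_def)
  have rv: "roots g = {v}" using a(1) roots_single by (auto simp: F1_def)
  from ch_Unroot1_S[OF a(2)] rv have m: "m = [v]" by auto
  have g': "g' = g\<lparr>nmk := (nmk g)(v := NGrey), rt := {}\<rparr>" using a(1,3) m by (simp add: F1_def)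
  have "core cn d g'" unfolding g' by (rule core_upd[OF c]) (use a(1) c in \<open>auto simp: F1_def core_def\<close>)
  moreover have "nb g' = nb g - 1 \<and> nb g \<ge> 1"
  proof -
    have "nodes_mk g' NBlue = nodes_mk g NBlue - {v}" "v \<in> nodes_mk g NBlue"
      using a(1) by (auto simp: g' nodes_mk_def F1_def)
    then show ?thesis unfolding nb_def using card_minus1 fin_nodes core_fin[OF c] by metis
  qed
  ultimately show "FH cn d g' b'" using a(1,4) unfolding FH_def F1_def
    by (auto simp: defs0 g')
next
  fix g b c b' assume a: "F1 cn d 14 v g b" "(None, c) \<in> search Unroot1 g" "b \<le> b' + 7"
  have rv: "roots g = {v}" using a(1) roots_single by (auto simp: F1_def)
  show False using ch_Unroot1_N[OF a(2)] a(1) rv by (auto simp: F1_def)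
qed

lemma fb_all: "ht (FH cn d) (Loop (Seq (R Root1)
                  (Seq (Loop (Seq (R UnmarkedEdge)
                                  (Seq (IfC (R Reduce) (R SetFlag) Skip) (R Finish))))
                       (R Unroot1)))) (FT cn d 21) (\<lambda>_ _. False)"
proof -
  have inner: "ht (F1 cn d 7 v) (Seq (R UnmarkedEdge) (Seq (IfC (R Reduce) (R SetFlag) Skip) (R Finish)))
     (F1 cn d 7 v) (F1 cn d 14 v)" for v
    by (rule ht_seq[OF fin_ue ht_ex[OF ht_seq[OF fin_if fin_finish]]])
  have rest: "ht (F1 cn d 7 v) (Seq (Loop (Seq (R UnmarkedEdge) (Seq (IfC (R Reduce) (R SetFlag) Skip) (R Finish)))) (R Unroot1))
     (FH cn d) (\<lambda>_ _. False)" for v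
    by (rule ht_seq[OF ht_loop[OF _ inner] fin_unroot1]) simp
  have body: "ht (FH cn d) (Seq (R Root1)
                  (Seq (Loop (Seq (R UnmarkedEdge)
                                  (Seq (IfC (R Reduce) (R SetFlag) Skip) (R Finish))))
                       (R Unroot1))) (FH cn d) (FT cn d 21)"
    by (rule ht_seq[OF fin_root1 ht_ex[OF rest]])
  show ?thesis by (rule ht_loop[OF _ body]) simp
qed

lemma fin_flag: "ht (\<lambda>g b. FT cn d 21 g b \<and> g = g0) (R Flag) (\<lambda>_ b. FT cn d 14 g0 b) (FT cn d 14)"
proof (rule ht_R)
  fix g b assume a: "FT cn d 21 g b \<and> g = g0"
  then have c: "core cn d g" unfolding FT_def base0_def by blast
  then show "finite (V g) \<and> finite (E g) \<and> bnd 7 (rule_step Flag g) \<and> 7 \<le> b"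
    using a ok_R[of cn d g Flag] by (auto simp: FT_def base0_def)
next
  fix g b m c g' b' assume "FT cn d 21 g b \<and> g = g0" "b \<le> b' + 7"
  then show "FT cn d 14 g0 b'" unfolding FT_def by auto
next
  fix g b c b' assume "FT cn d 21 g b \<and> g = g0" "b \<le> b' + 7"
  then show "FT cn d 14 g b'" unfolding FT_def by auto
qed

lemma flag_all: "ht (FT cn d 21) (IfC (R Flag) Fail Skip) (FT cn d 14) (\<lambda>_ _. True)"
  by (rule ht_conseq[OF ht_if[OF fin_flag ht_fail ht_skip]]) auto

lemma dc: "ht (FT cn d 14) (R DeleteCounter) ND (\<lambda>_ _. True)"
proof (rule ht_R)
  fix g b assume a: "FT cn d 14 g b"
  then have c: "core cn d g" by (simp add: FT_def base0_def)
  then show "finite (V g) \<and> finite (E g) \<and> bnd 7 (rule_step DeleteCounter g) \<and> 7 \<le> b"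
    using a ok_R[of cn d g DeleteCounter] by (auto simp: FT_def base0_def)
next
  fix g b m c g' b' assume a: "FT cn d 14 g b" "(Some m, c) \<in> search DeleteCounter g" "g' \<in> app DeleteCounter g m" "b \<le> b' + 7"
  have c: "core cn d g" using a(1) by (simp add: FT_def base0_def)
  have g': "V g' = V g - {m ! 1}" "E g' = E g - {m ! 2}" using a(3) by auto
  have f: "finite (V g')" "finite (E g')" using g' core_fin[OF c] by auto
  have "card (nodes_mk g' NUnm) \<le> card (V g')" using card_nodes_le f by blast
  also have "\<dots> \<le> card (V g)" unfolding g' using core_fin[OF c] by (simp add: card_mono)
  finally show "ND g' b'" using f a(1,4) unfolding ND_def FT_def by auto
qed simp

lemma ndi: "ht ND (R NoDegInv) ND (\<lambda>_ _. True)"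
proof (rule ht_R)
  fix g b assume a: "ND g b"
  then show "finite (V g) \<and> finite (E g) \<and> bnd 7 (rule_step NoDegInv g) \<and> 7 \<le> b"
    using bnd_rule_step[OF bs_NDI'] by (auto simp: ND_def)
next
  fix g b m c g' b' assume a: "ND g b" "(Some m, c) \<in> search NoDegInv g" "g' \<in> app NoDegInv g m" "b \<le> b' + 7"
  from ch_NDI_S[OF a(2)] obtain v where v: "v \<in> nodes_mk g NUnm" "m = [v]" by blast
  have g': "g' = g\<lparr>nmk := (nmk g)(v := NGrey)\<rparr>" using a(3) v by simp
  have "card (nodes_mk g' NUnm) = card (nodes_mk g NUnm) - 1 \<and> card (nodes_mk g NUnm) \<ge> 1"
  proof -
    have "nodes_mk g' NUnm = nodes_mk g NUnm - {v}" using v by (auto simp: g' nodes_mk_def)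
    then show ?thesis using v card_minus1 fin_nodes a(1) unfolding ND_def by metis
  qed
  then show "ND g' b'" using a(1,4) unfolding ND_def by (auto simp: g')
qed simp

lemma final_all: "ht (FH cn d) Final (\<lambda>_ _. True) (\<lambda>_ _. True)"
proof -
  have l: "ht ND (Loop (R NoDegInv)) (\<lambda>_ _. True) (\<lambda>_ _. False)" by (rule ht_loop[OF _ ndi]) simp
  show ?thesis unfolding Final_def
    by (rule ht_conseq[OF ht_seq_any[OF fb_all ht_seq_any[OF flag_all ht_seq_any[OF dc l]]]]) auto
qed


definition BB :: "hgraph \<Rightarrow> nat" where "BB g = 1000 * card (V g) * (card (E g) + 1)"

lemma sc_post:
  assumes inp: "bf_input G" and v: "v \<in> rt G" and cV: "c \<notin> V G" and eE: "e \<notin> E G"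
    and g': "g' = G\<lparr>V := insert c (V G), E := insert e (E G), src := (src G)(e := c), tgt := (tgt G)(e := v),
        nlab := (nlab G)(v := nlab G v @ [AInt 0], c := [AInt 0]), elab := (elab G)(e := []),
        nmk := (nmk G)(v := NBlue, c := NGreen), emk := (emk G)(e := EDashed),
        rt := rt G - {v, c}\<rparr>"
    and bud: "BB G \<le> b' + 7"
  shows "ICnt c e g' b'"
proof -
  have w: "finite (V G)" "finite (E G)" "\<forall>e\<in>E G. src G e \<in> V G \<and> tgt G e \<in> V G" "rt G \<subseteq> V G"
    using inp unfolding bf_input_def wf_graph_def by auto
  have grey: "\<forall>u\<in>V G. nmk G u = NGrey" and card1: "card (rt G) = 1"
    and edges: "\<forall>e\<in>E G. emk G e = EUnm" using inp unfolding bf_input_def by auto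
  have rtv: "rt G = {v}" using card1 v by (metis card_1_singletonE singletonD)
  have vV: "v \<in> V G" using v w(4) by auto
  have vc: "v \<noteq> c" using vV cV by auto
  have core: "core c e g'" unfolding core_def g' using w grey edges vV cV eE vc rtv by auto
  have red: "edges_mk g' ERed = {}" unfolding edges_mk_def g' using edges eE by auto
  have rt0: "rt g' = {}" unfolding g' using rtv by auto
  have lab0: "lab c 0 g'" unfolding lab_def g' by simp
  define n where "n = card (V G)"
  define m where "m = card (E G)"
  have n1: "n \<ge> 1" using vV w(1) card_gt_0_iff[of "V G"] unfolding n_def by auto
  have cv': "card (V g') = n + 1" unfolding g' n_def using w(1) cV by simp
  have ce': "card (E g') = m + 1" unfolding g' m_def using w(2) eE by simp
  have ngr: "ngr g' \<le> n + 1" unfolding ngr_def using card_nodes_le[of g'] core_fin[OF core] cv' by simp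
  have "(0 + ngr g') * PP g' \<le> (n + 1) * PP g'" using mult_le_mono1[OF ngr] by simp
  moreover have "(n + 1) * PP g' = 168 * n + 147 * (n * m) + 168 + 147 * m"
    unfolding PP_def ce' by (simp add: algebra_simps)
  moreover have "Fin g' = 35 * n + 28 * m + 98" unfolding Fin_def cv' ce' by simp
  moreover have "BB G = 1000 * (n * m) + 1000 * n" unfolding BB_def n_def[symmetric] m_def[symmetric]
    by (simp add: algebra_simps)
  moreover have "m \<le> n * m" using n1 by simp
  ultimately have "7 * ngr g' + 7 + (0 + ngr g') * PP g' + 28 * card (V g') + Fin g' \<le> b'"
    using bud ngr cv' n1 by linarith
  then show ?thesis unfolding ICnt_def base0_def using core red rt0 lab0 by blast
qed

lemma sc: "ht (\<lambda>g b. bf_input g \<and> b = BB g) (R SetCounter) (\<lambda>g b. \<exists>cn d. ICnt cn d g b) (\<lambda>_ _. True)"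
proof (rule ht_R)
  fix g b assume a: "bf_input g \<and> b = BB g"
  have w: "finite (V g)" "finite (E g)" "rt g \<subseteq> V g" using a unfolding bf_input_def wf_graph_def by auto
  have grey: "\<forall>u\<in>V g. nmk g u = NGrey" and card1: "card (rt g) = 1"
    and edges: "\<forall>e\<in>E g. emk g e = EUnm" using a unfolding bf_input_def by auto
  have "roots g = rt g" unfolding roots_def using w by auto
  moreover have "nodes_mk g NGreen = {}" using grey unfolding nodes_mk_def by auto
  moreover have "out_mk g u ERed = {}" "out_mk g u EDashed = {}" for u using edges unfolding out_mk_def by auto
  ultimately have "sane g" unfolding sane_def using card1 by simp
  then have "bnd 7 (rule_step SetCounter g)" using bnd_rs by blast
  moreover have "card (V g) \<ge> 1" using card1 w card_mono[OF w(1) w(3)] by simp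
  then have "7 \<le> b" using a unfolding BB_def by (simp add: mult_le_mono)
  ultimately show "finite (V g) \<and> finite (E g) \<and> bnd 7 (rule_step SetCounter g) \<and> 7 \<le> b" using w by blast
next
  fix g b m c g' b' assume a: "bf_input g \<and> b = BB g" "(Some m, c) \<in> search SetCounter g" "g' \<in> app SetCounter g m" "b \<le> b' + 7"
  from ch_SetCounter[OF a(2)] obtain v where v: "v \<in> roots g" "m = [v]" by blast
  from a(3) v obtain cc ee where ce: "cc \<notin> V g" "ee \<notin> E g"
    "g' = g\<lparr>V := insert cc (V g), E := insert ee (E g), src := (src g)(ee := cc), tgt := (tgt g)(ee := v),
        nlab := (nlab g)(v := nlab g v @ [AInt 0], cc := [AInt 0]), elab := (elab g)(ee := []),
        nmk := (nmk g)(v := NBlue, cc := NGreen), emk := (emk g)(ee := EDashed),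
        rt := rt g - {v, cc}\<rparr>" by (auto simp: Let_def)
  have "ICnt cc ee g' b'" using sc_post[of g v cc ee g' b'] a(1,4) v(1) ce unfolding roots_def by auto
  then show "\<exists>cn d. ICnt cn d g' b'" by blast
qed simp

lemma bf_all: "ht (\<lambda>g b. bf_input g \<and> b = BB g) bellman_ford (\<lambda>_ _. True) (\<lambda>_ _. True)"
proof -
  have rest: "ht (\<lambda>g b. \<exists>cn d. ICnt cn d g b)
     (Seq (Loop (R Count)) (Seq (Loop (Seq (R Decrement) (Seq (Loop Relax) (Loop Clean)))) Final))
     (\<lambda>_ _. True) (\<lambda>_ _. True)"
    apply (rule ht_ex)+
    apply (rule ht_conseq[OF ht_seq_any[OF count_all ht_seq_any[OF main_all final_all]]])
    by auto
  show ?thesis unfolding bellman_ford_def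
    by (rule ht_conseq[OF ht_seq_any[OF sc rest]]) auto
qed

theorem mainTheorem8:
  shows "\<exists>C::nat. \<forall>G. bf_input G \<longrightarrow>
           (let B = C * card (V G) * (card (E G) + 1) in
              (\<exists>r. exec bellman_ford G B r) \<and> \<not> exec bellman_ford G B Out)"
proof (intro exI[of _ 1000] allI impI)
  fix G assume "bf_input G"
  then show "let B = 1000 * card (V G) * (card (E G) + 1) in (\<exists>r. exec bellman_ford G B r) \<and> \<not> exec bellman_ford G B Out"
    using bf_all unfolding ht_def BB_def Let_def by blast
qed


end
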